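(* Let $\Phi$ be an automorphism of $(Ass\text{-}\mathbf K)^0$ such that $\Phi(A)=A$ and $s_A(x)=x$ for all $x\in X_A$, for every object $A$. Then all of the following hold. (1) There is a permutation $\tilde s$ of $\mathbf K$ with $s_A\circ f_A=f_A\circ\tilde s$ for every object $A$. (2) Put $\tilde0=\tilde s(0)$ and $\tilde1=\tilde s(1)$, identified with their images in each algebra. Then $\tilde1\neq\tilde0$. (3) For every object $A$ and all $u,v\in A$, $$s_A(u+v)=s_A(u)+s_A(v)-\tilde0.$$ (4) Exactly one of the following two alternatives holds: (I) for every object $A$ and all $u,v\in A$, $s_A(uv)=(\tilde1-\tilde0)^{-1}(s_A(u)-\tilde0)(s_A(v)-\tilde0)+\tilde0$; (II) for every object $A$ and all $u,v\in A$, $s_A(uv)=(\tilde1-\tilde0)^{-1}(s_A(v)-\tilde0)(s_A(u)-\tilde0)+\tilde0$.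
   Context: $\mathbf K$ is an infinite field. A $\mathbf K$-algebra is an associative unital ring $A$ with a unital ring homomorphism $f_A:\mathbf K\to Z(A)$, and homomorphisms are unital ring homomorphisms commuting with the structure maps. $(Ass\text{-}\mathbf K)^0$ is the category of free associative $\mathbf K$-algebras $\mathbf K\langle X_A\rangle$ on finite subsets $X_A$ of a fixed infinite set $X_0$, with $X_A$ the designated basis. $F_1$ is the free algebra on one $x_0\in X_0$. The main function of an automorphism $\Phi$ fixing $F_1$ is $s_A(a)=\Phi(\alpha_a)(x_0)$, where $\alpha_a:F_1\to A$ sends $x_0\mapsto a$. It satisfies $\Phi(\mu)=s_B\circ\mu\circ s_A^{-1}$. *)

theory Defs
  imports Main "HOL-Library.FuncSet"
begin

text \<open>Free associative algebras K<X_A>, X_A a finite subset of an infinite ambient type 'x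
(playing the role of X_0). An element is a finitely supported coefficient function on words
(lists of letters). All free algebras live inside the common ambient space of such functions;
the object A is identified with its finite set of generators X_A.\<close>

definition fa_carrier :: "'x set \<Rightarrow> ('x list \<Rightarrow> 'k::field) set" where
  "fa_carrier X = {p. finite {w. p w \<noteq> 0} \<and> (\<forall>w. p w \<noteq> 0 \<longrightarrow> set w \<subseteq> X)}"

definition fa_add :: "('x list \<Rightarrow> 'k::field) \<Rightarrow> ('x list \<Rightarrow> 'k) \<Rightarrow> ('x list \<Rightarrow> 'k)" where
  "fa_add p q = (\<lambda>w. p w + q w)"

definition fa_sub :: "('x list \<Rightarrow> 'k::field) \<Rightarrow> ('x list \<Rightarrow> 'k) \<Rightarrow> ('x list \<Rightarrow> 'k)" where
  "fa_sub p q = (\<lambda>w. p w - q w)"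

definition fa_mul :: "('x list \<Rightarrow> 'k::field) \<Rightarrow> ('x list \<Rightarrow> 'k) \<Rightarrow> ('x list \<Rightarrow> 'k)" where
  "fa_mul p q = (\<lambda>w. \<Sum>i\<le>length w. p (take i w) * q (drop i w))"

definition fa_const :: "'k::field \<Rightarrow> ('x list \<Rightarrow> 'k)" where
  "fa_const c = (\<lambda>w. if w = [] then c else 0)"

definition fa_var :: "'x \<Rightarrow> ('x list \<Rightarrow> 'k::field)" where
  "fa_var x = (\<lambda>w. if w = [x] then 1 else 0)"

fun word_eval :: "('x \<Rightarrow> ('y list \<Rightarrow> 'k::field)) \<Rightarrow> 'x list \<Rightarrow> ('y list \<Rightarrow> 'k)" where
  "word_eval \<sigma> [] = fa_const 1"
| "word_eval \<sigma> (x # w) = fa_mul (\<sigma> x) (word_eval \<sigma> w)"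

definition fa_eval :: "('x \<Rightarrow> ('y list \<Rightarrow> 'k::field)) \<Rightarrow> ('x list \<Rightarrow> 'k) \<Rightarrow> ('y list \<Rightarrow> 'k)" where
  "fa_eval \<sigma> p = (\<lambda>u. \<Sum>v\<in>{v. p v \<noteq> 0}. p v * word_eval \<sigma> v u)"

definition fa_hom :: "'x set \<Rightarrow> 'x set \<Rightarrow> (('x list \<Rightarrow> 'k::field) \<Rightarrow> ('x list \<Rightarrow> 'k)) set" where
  "fa_hom A B = {h. h \<in> extensional (fa_carrier A) \<and> h \<in> fa_carrier A \<rightarrow> fa_carrier B
     \<and> (\<forall>p\<in>fa_carrier A. \<forall>q\<in>fa_carrier A.
          h (fa_add p q) = fa_add (h p) (h q) \<and> h (fa_mul p q) = fa_mul (h p) (h q))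
     \<and> (\<forall>c. h (fa_const c) = fa_const c)}"

definition fa_id :: "'x set \<Rightarrow> ('x list \<Rightarrow> 'k::field) \<Rightarrow> ('x list \<Rightarrow> 'k)" where
  "fa_id A = restrict (\<lambda>p. p) (fa_carrier A)"

definition fa_comp :: "'x set \<Rightarrow> (('x list \<Rightarrow> 'k::field) \<Rightarrow> ('x list \<Rightarrow> 'k))
     \<Rightarrow> (('x list \<Rightarrow> 'k) \<Rightarrow> ('x list \<Rightarrow> 'k)) \<Rightarrow> ('x list \<Rightarrow> 'k) \<Rightarrow> ('x list \<Rightarrow> 'k)" where
  "fa_comp A g f = restrict (g \<circ> f) (fa_carrier A)"

text \<open>An automorphism of (Ass-K)^0 acting as identity on objects: on each hom-set Hom(A,B)
a bijection onto Hom(A,B), compatible with composition and identities.\<close>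
definition obj_fixing_auto ::
  "('x set \<Rightarrow> 'x set \<Rightarrow> (('x list \<Rightarrow> 'k::field) \<Rightarrow> ('x list \<Rightarrow> 'k)) \<Rightarrow> (('x list \<Rightarrow> 'k) \<Rightarrow> ('x list \<Rightarrow> 'k))) \<Rightarrow> bool"
  where
  "obj_fixing_auto \<Phi> \<longleftrightarrow>
     (\<forall>A B. finite A \<longrightarrow> finite B \<longrightarrow> bij_betw (\<Phi> A B) (fa_hom A B) (fa_hom A B))
   \<and> (\<forall>A B C f g. finite A \<longrightarrow> finite B \<longrightarrow> finite C \<longrightarrow> f \<in> fa_hom A B \<longrightarrow> g \<in> fa_hom B C \<longrightarrow>
        \<Phi> A C (fa_comp A g f) = fa_comp A (\<Phi> B C g) (\<Phi> A B f))
   \<and> (\<forall>A. finite A \<longrightarrow> \<Phi> A A (fa_id A) = fa_id A)"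

definition alpha :: "'x \<Rightarrow> ('x list \<Rightarrow> 'k::field) \<Rightarrow> ('x list \<Rightarrow> 'k) \<Rightarrow> ('x list \<Rightarrow> 'k)" where
  "alpha x0 a = restrict (fa_eval (\<lambda>_. a)) (fa_carrier {x0})"

definition main_fun ::
  "('x set \<Rightarrow> 'x set \<Rightarrow> (('x list \<Rightarrow> 'k::field) \<Rightarrow> ('x list \<Rightarrow> 'k)) \<Rightarrow> (('x list \<Rightarrow> 'k) \<Rightarrow> ('x list \<Rightarrow> 'k)))
    \<Rightarrow> 'x \<Rightarrow> 'x set \<Rightarrow> ('x list \<Rightarrow> 'k) \<Rightarrow> ('x list \<Rightarrow> 'k)" where
  "main_fun \<Phi> x0 A a = \<Phi> {x0} A (alpha x0 a) (fa_var x0)"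

end

theory Submission
  imports Defs "HOL-Library.Product_Lexorder"
begin


definition supp :: "('x list \<Rightarrow> 'k::zero) \<Rightarrow> 'x list set" where
  "supp p = {w. p w \<noteq> 0}"

definition smul :: "'k::field \<Rightarrow> ('x list \<Rightarrow> 'k) \<Rightarrow> ('x list \<Rightarrow> 'k)" where
  "smul k p = (\<lambda>w. k * p w)"

lemma finite_splits: "finite {(u,v). u @ v = (w::'x list)}"
proof -
  have "{(u,v). u @ v = w} = (\<lambda>i. (take i w, drop i w)) ` {..length w}"
    apply (auto simp: image_iff)
    subgoal for u v by (rule bexI[where x="length u"]) auto
    done
  then show ?thesis by simp
qed

lemma fa_mul_alt: "fa_mul p q w = (\<Sum>(u,v)\<in>{(u,v). u @ v = w}. p u * q v)"
  unfolding fa_mul_def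
proof (rule sum.reindex_bij_witness[where j="\<lambda>i. (take i w, drop i w)" and i="\<lambda>(u,v). length u"])
qed auto

lemma fa_mul_assoc: "fa_mul (fa_mul p q) r = fa_mul p (fa_mul q r)"
proof
  fix w :: "'a list"
  have "fa_mul (fa_mul p q) r w = (\<Sum>(a,t)\<in>{(u,v). u @ v = w}. (\<Sum>(u,v)\<in>{(u,v). u @ v = a}. p u * q v) * r t)"
    by (simp add: fa_mul_alt)
  also have "\<dots> = (\<Sum>(a,t)\<in>{(u,v). u @ v = w}. (\<Sum>(u,v)\<in>{(u,v). u @ v = a}. p u * q v * r t))"
    by (simp add: sum_distrib_right case_prod_beta)
  also have "\<dots> = (\<Sum>x\<in>Sigma {(u,v). u @ v = w} (\<lambda>(a,t). {(u,v). u @ v = a}). (case x of ((a,t),(u,v)) \<Rightarrow> p u * q v * r t))"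
    by (subst sum.Sigma[symmetric]) (auto simp: finite_splits case_prod_beta)
  also have "\<dots> = (\<Sum>(u,v,t)\<in>{(u,v,t). u @ v @ t = w}. p u * q v * r t)"
    by (rule sum.reindex_bij_witness[where i="\<lambda>(u,v,t). ((u @ v, t), (u, v))" and j="\<lambda>((a,t),(u,v)). (u,v,t)"]) auto
  finally have L: "fa_mul (fa_mul p q) r w = (\<Sum>(u,v,t)\<in>{(u,v,t). u @ v @ t = w}. p u * q v * r t)" .
  have "fa_mul p (fa_mul q r) w = (\<Sum>(u,b)\<in>{(u,v). u @ v = w}. p u * (\<Sum>(v,t)\<in>{(u,v). u @ v = b}. q v * r t))"
    by (simp add: fa_mul_alt)
  also have "\<dots> = (\<Sum>(u,b)\<in>{(u,v). u @ v = w}. (\<Sum>(v,t)\<in>{(u,v). u @ v = b}. p u * q v * r t))"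
    by (simp add: sum_distrib_left case_prod_beta mult.assoc)
  also have "\<dots> = (\<Sum>x\<in>Sigma {(u,v). u @ v = w} (\<lambda>(u,b). {(v,t). v @ t = b}). (case x of ((u,b),(v,t)) \<Rightarrow> p u * q v * r t))"
    by (subst sum.Sigma[symmetric]) (auto simp: finite_splits case_prod_beta)
  also have "\<dots> = (\<Sum>(u,v,t)\<in>{(u,v,t). u @ v @ t = w}. p u * q v * r t)"
    by (rule sum.reindex_bij_witness[where i="\<lambda>(u,v,t). ((u, v @ t), (v, t))" and j="\<lambda>((u,b),(v,t)). (u,v,t)"]) auto
  finally show "fa_mul (fa_mul p q) r w = fa_mul p (fa_mul q r) w" using L by simp
qed

lemma fa_mul_const_left: "fa_mul (fa_const k) q = smul k q"
proof
  fix w :: "'a list"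
  have "fa_mul (fa_const k) q w = (\<Sum>i\<in>{0}. fa_const k (take i w) * q (drop i w))"
    unfolding fa_mul_def by (rule sum.mono_neutral_right) (auto simp: fa_const_def)
  then show "fa_mul (fa_const k) q w = smul k q w" by (simp add: fa_const_def smul_def)
qed

lemma fa_mul_const_right: "fa_mul q (fa_const k) = smul k q"
proof
  fix w :: "'a list"
  have "fa_mul q (fa_const k) w = (\<Sum>i\<in>{length w}. q (take i w) * fa_const k (drop i w))"
    unfolding fa_mul_def by (rule sum.mono_neutral_right) (auto simp: fa_const_def)
  then show "fa_mul q (fa_const k) w = smul k q w" by (simp add: fa_const_def smul_def mult.commute)
qed

lemma smul_one[simp]: "smul 1 q = q" by (simp add: smul_def)

lemma fa_mul_one_left[simp]: "fa_mul (fa_const 1) q = q" by (simp add: fa_mul_const_left)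
lemma fa_mul_one_right[simp]: "fa_mul q (fa_const 1) = q" by (simp add: fa_mul_const_right)

lemma fa_mul_add_left: "fa_mul (fa_add p q) r = fa_add (fa_mul p r) (fa_mul q r)"
  by (auto simp: fa_mul_def fa_add_def distrib_right sum.distrib)
lemma fa_mul_add_right: "fa_mul r (fa_add p q) = fa_add (fa_mul r p) (fa_mul r q)"
  by (auto simp: fa_mul_def fa_add_def distrib_left sum.distrib)
lemma fa_mul_sub_left: "fa_mul (fa_sub p q) r = fa_sub (fa_mul p r) (fa_mul q r)"
  by (auto simp: fa_mul_def fa_sub_def left_diff_distrib sum_subtractf)
lemma fa_mul_sub_right: "fa_mul r (fa_sub p q) = fa_sub (fa_mul r p) (fa_mul r q)"
  by (auto simp: fa_mul_def fa_sub_def right_diff_distrib sum_subtractf)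
lemma fa_mul_smul_left: "fa_mul (smul k p) r = smul k (fa_mul p r)"
  by (auto simp: fa_mul_def smul_def sum_distrib_left mult.assoc)
lemma fa_mul_smul_right: "fa_mul r (smul k p) = smul k (fa_mul r p)"
  by (auto simp: fa_mul_def smul_def sum_distrib_left mult.assoc mult.left_commute)

lemma fa_mul_sum_left: "fa_mul (\<lambda>t. \<Sum>a\<in>A. f a t) g = (\<lambda>u. \<Sum>a\<in>A. fa_mul (f a) g u)"
  unfolding fa_mul_def by (auto simp: sum_distrib_right intro: sum.swap)
lemma fa_mul_sum_right: "fa_mul g (\<lambda>t. \<Sum>a\<in>A. f a t) = (\<lambda>u. \<Sum>a\<in>A. fa_mul g (f a) u)"
  unfolding fa_mul_def by (auto simp: sum_distrib_left intro: sum.swap)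

lemma word_eval_append: "word_eval \<sigma> (u @ v) = fa_mul (word_eval \<sigma> u) (word_eval \<sigma> v)"
  by (induction u) (simp_all add: fa_mul_assoc)

lemma fa_mul_Nil[simp]: "fa_mul p q [] = p [] * q []"
  by (simp add: fa_mul_def)
lemma fa_mul_1: "fa_mul p q [a] = p [] * q [a] + p [a] * q []"
  by (simp add: fa_mul_def atMost_Suc)
lemma fa_mul_2: "fa_mul p q [a,b] = p [] * q [a,b] + p [a] * q [b] + p [a,b] * q []"
  by (simp add: fa_mul_def atMost_Suc numeral_2_eq_2)
lemma fa_mul_3: "fa_mul p q [a,b,c] = p [] * q [a,b,c] + p [a] * q [b,c] + p [a,b] * q [c] + p [a,b,c] * q []"
  by (simp add: fa_mul_def atMost_Suc numeral_3_eq_3)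

lemma fa_mul_var_left: "fa_mul (fa_var a) q t = (case t of [] \<Rightarrow> 0 | b # t' \<Rightarrow> if b = a then q t' else 0)"
proof (cases t)
  case Nil then show ?thesis by (simp add: fa_var_def)
next
  case (Cons b t')
  have "fa_mul (fa_var a) q t = (\<Sum>i\<in>{1}. fa_var a (take i t) * q (drop i t))"
    unfolding fa_mul_def by (rule sum.mono_neutral_right) (auto simp: fa_var_def Cons take_Cons' split: if_splits)
  then show ?thesis by (simp add: Cons fa_var_def)
qed

lemma word_eval_var: "word_eval fa_var v = (\<lambda>t. if t = v then 1 else 0)"
proof (induction v)
  case Nil then show ?case by (auto simp: fa_const_def)
next
  case (Cons a v)
  show ?case by (rule ext) (auto simp: fa_mul_var_left Cons split: list.split)
qed




lemma carrier_iff: "p \<in> fa_carrier A \<longleftrightarrow> finite (supp p) \<and> (\<forall>w\<in>supp p. set w \<subseteq> A)"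
  by (auto simp: fa_carrier_def supp_def)

lemma carrierD: "p \<in> fa_carrier A \<Longrightarrow> p w \<noteq> 0 \<Longrightarrow> set w \<subseteq> A"
  by (auto simp: fa_carrier_def)

lemma carrier_finite: "p \<in> fa_carrier A \<Longrightarrow> finite (supp p)"
  by (auto simp: carrier_iff)

lemma const_carrier[simp]: "fa_const k \<in> fa_carrier A"
proof -
  have "supp (fa_const k) \<subseteq> {[]}" by (auto simp: supp_def fa_const_def)
  then show ?thesis by (auto simp: carrier_iff intro: finite_subset)
qed

lemma var_carrier: "a \<in> A \<Longrightarrow> fa_var a \<in> fa_carrier A"
proof -
  have "supp (fa_var a) \<subseteq> {[a]}" by (auto simp: supp_def fa_var_def split: if_splits)
  moreover assume "a \<in> A"
  ultimately show ?thesis by (auto simp: carrier_iff intro: finite_subset)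
qed

lemma zero_carrier[simp]: "(\<lambda>_. 0) \<in> fa_carrier A"
  by (auto simp: carrier_iff supp_def)

lemma lin_carrier: "p \<in> fa_carrier A \<Longrightarrow> q \<in> fa_carrier A \<Longrightarrow> (\<lambda>t. a * p t + b * q t) \<in> fa_carrier A"
proof -
  assume p: "p \<in> fa_carrier A" and q: "q \<in> fa_carrier A"
  have "supp (\<lambda>t. a * p t + b * q t) \<subseteq> supp p \<union> supp q" by (auto simp: supp_def)
  with p q show ?thesis by (auto simp: carrier_iff intro: finite_subset)
qed

lemma add_carrier: "p \<in> fa_carrier A \<Longrightarrow> q \<in> fa_carrier A \<Longrightarrow> fa_add p q \<in> fa_carrier A"
  using lin_carrier[of p A q 1 1] by (simp add: fa_add_def)
lemma sub_carrier: "p \<in> fa_carrier A \<Longrightarrow> q \<in> fa_carrier A \<Longrightarrow> fa_sub p q \<in> fa_carrier A"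
  using lin_carrier[of p A q 1 "-1"] by (simp add: fa_sub_def)
lemma smul_carrier: "p \<in> fa_carrier A \<Longrightarrow> smul k p \<in> fa_carrier A"
  using lin_carrier[of p A p k 0] by (simp add: smul_def)

lemma supp_mul: "supp (fa_mul p q) \<subseteq> (\<lambda>(u,v). u @ v) ` (supp p \<times> supp q)"
proof
  fix w assume "w \<in> supp (fa_mul p q)"
  then have "(\<Sum>(u,v)\<in>{(u,v). u @ v = w}. p u * q v) \<noteq> 0" by (simp add: supp_def fa_mul_alt)
  then obtain x where "x \<in> {(u,v). u @ v = w}" "(case x of (u,v) \<Rightarrow> p u * q v) \<noteq> 0"
    by (rule sum.not_neutral_contains_not_neutral)
  then obtain u v where "u @ v = w" "p u * q v \<noteq> 0" by auto
  then show "w \<in> (\<lambda>(u,v). u @ v) ` (supp p \<times> supp q)" by (auto simp: supp_def image_iff)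
qed

lemma mul_carrier: "p \<in> fa_carrier A \<Longrightarrow> q \<in> fa_carrier A \<Longrightarrow> fa_mul p q \<in> fa_carrier A"
proof -
  assume p: "p \<in> fa_carrier A" and q: "q \<in> fa_carrier A"
  have "finite ((\<lambda>(u,v). u @ v) ` (supp p \<times> supp q))" using p q by (intro finite_imageI finite_cartesian_product) (auto simp: carrier_iff)
  moreover have "set w \<subseteq> A" if wm: "w \<in> supp (fa_mul p q)" for w
  proof -
    have "w \<in> (\<lambda>(u,v). u @ v) ` (supp p \<times> supp q)" using supp_mul[of p q] wm by (rule subsetD)
    then obtain u v where uv: "u \<in> supp p" "v \<in> supp q" "w = u @ v" by auto
    have "set u \<subseteq> A" "set v \<subseteq> A" using p q uv(1,2) unfolding carrier_iff by auto
    then show ?thesis using uv(3) by simp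
  qed
  ultimately show ?thesis unfolding carrier_iff using finite_subset[OF supp_mul[of p q]] by blast
qed

lemma sum_carrier: "finite S \<Longrightarrow> (\<And>a. a \<in> S \<Longrightarrow> f a \<in> fa_carrier A) \<Longrightarrow> (\<lambda>t. \<Sum>a\<in>S. f a t) \<in> fa_carrier A"
proof (induction S rule: finite_induct)
  case empty then show ?case by simp
next
  case (insert x F)
  have "(\<lambda>t. \<Sum>a\<in>insert x F. f a t) = (\<lambda>t. 1 * f x t + 1 * (\<Sum>a\<in>F. f a t))" using insert by simp
  then show ?case using insert lin_carrier[of "f x" A "\<lambda>t. \<Sum>a\<in>F. f a t" 1 1] by simp
qed

lemma word_eval_carrier: "set v \<subseteq> A \<Longrightarrow> (\<And>a. a \<in> A \<Longrightarrow> \<sigma> a \<in> fa_carrier B) \<Longrightarrow> word_eval \<sigma> v \<in> fa_carrier B"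
  by (induction v) (auto intro: mul_carrier)

lemma fa_eval_superset: "finite S \<Longrightarrow> supp p \<subseteq> S \<Longrightarrow> fa_eval \<sigma> p = (\<lambda>u. \<Sum>v\<in>S. p v * word_eval \<sigma> v u)"
  unfolding fa_eval_def by (rule ext, rule sum.mono_neutral_left) (auto simp: supp_def)

lemma fa_eval_supp: "fa_eval \<sigma> p = (\<lambda>u. \<Sum>v\<in>supp p. p v * word_eval \<sigma> v u)"
  by (simp add: fa_eval_def supp_def)

lemma fa_eval_carrier: "p \<in> fa_carrier A \<Longrightarrow> (\<And>a. a \<in> A \<Longrightarrow> \<sigma> a \<in> fa_carrier B) \<Longrightarrow> fa_eval \<sigma> p \<in> fa_carrier B"
proof -
  assume p: "p \<in> fa_carrier A" and s: "\<And>a. a \<in> A \<Longrightarrow> \<sigma> a \<in> fa_carrier B"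
  have "fa_eval \<sigma> p = (\<lambda>u. \<Sum>v\<in>supp p. smul (p v) (word_eval \<sigma> v) u)"
    by (simp add: fa_eval_supp smul_def)
  also have "\<dots> \<in> fa_carrier B"
    using p s by (intro sum_carrier smul_carrier word_eval_carrier) (auto simp: carrier_iff)
  finally show ?thesis .
qed

lemma word_eval_cong: "set v \<subseteq> A \<Longrightarrow> (\<And>a. a \<in> A \<Longrightarrow> \<sigma> a = \<tau> a) \<Longrightarrow> word_eval \<sigma> v = word_eval \<tau> v"
  by (induction v) auto

lemma fa_eval_cong: "p \<in> fa_carrier A \<Longrightarrow> (\<And>a. a \<in> A \<Longrightarrow> \<sigma> a = \<tau> a) \<Longrightarrow> fa_eval \<sigma> p = fa_eval \<tau> p"
proof -
  assume p: "p \<in> fa_carrier A" and e: "\<And>a. a \<in> A \<Longrightarrow> \<sigma> a = \<tau> a"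
  have "word_eval \<sigma> v = word_eval \<tau> v" if "v \<in> supp p" for v
    using word_eval_cong[of v A \<sigma> \<tau>] that p e by (auto simp: carrier_iff)
  then show ?thesis by (simp add: fa_eval_supp)
qed

lemma fa_eval_var_id: "finite (supp p) \<Longrightarrow> fa_eval fa_var p = p"
proof
  fix u assume f: "finite (supp p)"
  show "fa_eval fa_var p u = p u"
  proof (cases "u \<in> supp p")
    case True
    have "fa_eval fa_var p u = (\<Sum>v\<in>supp p. p v * (if u = v then 1 else 0))"
      by (simp add: fa_eval_supp word_eval_var)
    also have "\<dots> = p u" using True f by (simp add: if_distrib sum.delta cong: if_cong)
    finally show ?thesis .
  next
    case False
    then show ?thesis by (auto simp: fa_eval_supp word_eval_var supp_def intro!: sum.neutral)
  qed
qed

lemma fa_eval_lin: "finite (supp p) \<Longrightarrow> finite (supp q) \<Longrightarrow>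
   fa_eval \<sigma> (\<lambda>t. a * p t + b * q t) = (\<lambda>u. a * fa_eval \<sigma> p u + b * fa_eval \<sigma> q u)"
proof -
  assume fp: "finite (supp p)" and fq: "finite (supp q)"
  let ?S = "supp p \<union> supp q"
  have s1: "supp (\<lambda>t. a * p t + b * q t) \<subseteq> ?S" by (auto simp: supp_def)
  show ?thesis
    using fp fq s1
    apply (subst fa_eval_superset[of ?S], simp, simp)
    apply (subst fa_eval_superset[of ?S p], simp, simp)
    apply (subst fa_eval_superset[of ?S q], simp, simp)
    apply (rule ext)
    apply (simp add: sum_distrib_left sum.distrib[symmetric] distrib_right mult.assoc)
    done
qed

lemma fa_eval_add: "finite (supp p) \<Longrightarrow> finite (supp q) \<Longrightarrow> fa_eval \<sigma> (fa_add p q) = fa_add (fa_eval \<sigma> p) (fa_eval \<sigma> q)"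
  using fa_eval_lin[of p q \<sigma> 1 1] by (simp add: fa_add_def)
lemma fa_eval_sub: "finite (supp p) \<Longrightarrow> finite (supp q) \<Longrightarrow> fa_eval \<sigma> (fa_sub p q) = fa_sub (fa_eval \<sigma> p) (fa_eval \<sigma> q)"
  using fa_eval_lin[of p q \<sigma> 1 "-1"] by (simp add: fa_sub_def)
lemma fa_eval_smul: "finite (supp p) \<Longrightarrow> fa_eval \<sigma> (smul k p) = smul k (fa_eval \<sigma> p)"
  using fa_eval_lin[of p p \<sigma> k 0] by (simp add: smul_def)

lemma fa_eval_const[simp]: "fa_eval \<sigma> (fa_const k) = fa_const k"
  by (subst fa_eval_superset[of "{[]}"]) (auto simp: supp_def fa_const_def intro!: ext)

lemma fa_eval_var[simp]: "fa_eval \<sigma> (fa_var a) = \<sigma> a"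
  by (subst fa_eval_superset[of "{[a]}"]) (auto simp: supp_def fa_var_def intro!: ext)

lemma fa_mul_scal_right: "fa_mul r (\<lambda>w. k * p w) u = k * fa_mul r p u"
  by (simp add: fa_mul_def sum_distrib_left mult.left_commute)

lemma fa_eval_mul: "finite (supp p) \<Longrightarrow> finite (supp q) \<Longrightarrow>
   fa_eval \<sigma> (fa_mul p q) = fa_mul (fa_eval \<sigma> p) (fa_eval \<sigma> q)"
proof
  fix u0
  assume fp: "finite (supp p)" and fq: "finite (supp q)"
  let ?f = "\<lambda>(u,v). u @ v :: 'a list"
  let ?P = "supp p \<times> supp q"
  let ?S = "?f ` ?P"
  have fP: "finite ?P" using fp fq by simp
  have coef: "fa_mul p q t = (\<Sum>x\<in>{x\<in>?P. ?f x = t}. (case x of (u,v) \<Rightarrow> p u * q v))" for t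
  proof -
    have "fa_mul p q t = (\<Sum>x\<in>{(u,v). u @ v = t}. (case x of (u,v) \<Rightarrow> p u * q v))" by (simp add: fa_mul_alt)
    also have "\<dots> = (\<Sum>x\<in>{x\<in>?P. ?f x = t}. (case x of (u,v) \<Rightarrow> p u * q v))"
      by (rule sum.mono_neutral_right) (auto simp: finite_splits supp_def)
    finally show ?thesis .
  qed
  have "fa_eval \<sigma> (fa_mul p q) u0 = (\<Sum>t\<in>?S. fa_mul p q t * word_eval \<sigma> t u0)"
    using supp_mul[of p q] fP by (subst fa_eval_superset[of ?S]) auto
  also have "\<dots> = (\<Sum>t\<in>?S. \<Sum>x\<in>{x\<in>?P. ?f x = t}. (case x of (a,b) \<Rightarrow> p a * q b * word_eval \<sigma> (a @ b) u0))"
    apply (rule sum.cong[OF refl])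
    apply (simp only: coef sum_distrib_right)
    apply (rule sum.cong[OF refl])
    apply auto
    done
  also have "\<dots> = (\<Sum>x\<in>?P. (case x of (a,b) \<Rightarrow> p a * q b * word_eval \<sigma> (a @ b) u0))"
    using fP by (rule sum.image_gen[symmetric])
  also have "\<dots> = (\<Sum>a\<in>supp p. \<Sum>b\<in>supp q. p a * q b * fa_mul (word_eval \<sigma> a) (word_eval \<sigma> b) u0)"
    by (simp add: sum.cartesian_product word_eval_append)
  also have "\<dots> = fa_mul (fa_eval \<sigma> p) (fa_eval \<sigma> q) u0"
  proof -
    have e: "fa_eval \<sigma> r = (\<lambda>u. \<Sum>v\<in>supp r. smul (r v) (word_eval \<sigma> v) u)" for r :: "'a list \<Rightarrow> 'b"
      by (simp add: fa_eval_supp smul_def)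
    show ?thesis
      unfolding e fa_mul_sum_left fa_mul_smul_left
      by (simp add: smul_def fa_mul_sum_right fa_mul_scal_right sum_distrib_left mult.assoc)
  qed
  finally show "fa_eval \<sigma> (fa_mul p q) u0 = fa_mul (fa_eval \<sigma> p) (fa_eval \<sigma> q) u0" .
qed




definition ev :: "'x set \<Rightarrow> ('x \<Rightarrow> ('x list \<Rightarrow> 'k::field)) \<Rightarrow> ('x list \<Rightarrow> 'k) \<Rightarrow> ('x list \<Rightarrow> 'k)" where
  "ev A \<sigma> = restrict (fa_eval \<sigma>) (fa_carrier A)"

lemma const_zero: "fa_const 0 = (\<lambda>_. 0)"
  by (auto simp: fa_const_def)

lemma ev_hom: "(\<And>a. a \<in> A \<Longrightarrow> \<sigma> a \<in> fa_carrier B) \<Longrightarrow> ev A \<sigma> \<in> fa_hom A B"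
  unfolding fa_hom_def ev_def
  by (auto simp: fa_eval_carrier add_carrier mul_carrier carrier_finite fa_eval_add fa_eval_mul)

lemma homD:
  assumes "h \<in> fa_hom A B"
  shows "h \<in> extensional (fa_carrier A)" "\<And>p. p \<in> fa_carrier A \<Longrightarrow> h p \<in> fa_carrier B"
    "\<And>p q. p \<in> fa_carrier A \<Longrightarrow> q \<in> fa_carrier A \<Longrightarrow> h (fa_add p q) = fa_add (h p) (h q)"
    "\<And>p q. p \<in> fa_carrier A \<Longrightarrow> q \<in> fa_carrier A \<Longrightarrow> h (fa_mul p q) = fa_mul (h p) (h q)"
    "\<And>c. h (fa_const c) = fa_const c"
  using assms unfolding fa_hom_def by auto

lemma hom_zero: "h \<in> fa_hom A B \<Longrightarrow> h (\<lambda>_. 0) = (\<lambda>_. 0)"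
  using homD(5)[of h A B 0] by (simp add: const_zero)

lemma hom_sum:
  assumes h: "h \<in> fa_hom A B" and S: "finite S" and f: "\<And>v. v \<in> S \<Longrightarrow> f v \<in> fa_carrier A"
  shows "h (\<lambda>t. \<Sum>v\<in>S. f v t) = (\<lambda>t. \<Sum>v\<in>S. h (f v) t)"
  using S f
proof (induction S rule: finite_induct)
  case empty then show ?case using hom_zero[OF h] by simp
next
  case (insert x F)
  have e: "(\<lambda>t. \<Sum>v\<in>insert x F. f v t) = fa_add (f x) (\<lambda>t. \<Sum>v\<in>F. f v t)"
    using insert by (simp add: fa_add_def)
  have c: "(\<lambda>t. \<Sum>v\<in>F. f v t) \<in> fa_carrier A" using insert by (intro sum_carrier) auto
  show ?case unfolding e using insert homD(3)[OF h, of "f x", OF _ c] by (simp add: fa_add_def)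
qed

lemma hom_smul: "h \<in> fa_hom A B \<Longrightarrow> p \<in> fa_carrier A \<Longrightarrow> h (smul k p) = smul k (h p)"
  using homD(4)[of h A B "fa_const k" p] homD(5)[of h A B k] by (simp add: fa_mul_const_left)

lemma hom_word: "h \<in> fa_hom A B \<Longrightarrow> set v \<subseteq> A \<Longrightarrow> h (word_eval fa_var v) = word_eval (\<lambda>z. h (fa_var z)) v"
proof (induction v)
  case Nil then show ?case using homD(5)[of h A B 1] by simp
next
  case (Cons a v)
  have "word_eval fa_var v \<in> fa_carrier A" using Cons by (intro word_eval_carrier[where A=A]) (auto intro: var_carrier)
  then show ?case using Cons homD(4)[OF Cons(2), of "fa_var a" "word_eval fa_var v"] by (simp add: var_carrier)
qed

lemma hom_eval: assumes h: "h \<in> fa_hom A B" and p: "p \<in> fa_carrier A"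
  shows "h p = fa_eval (\<lambda>z. h (fa_var z)) p"
proof -
  have fp: "finite (supp p)" using p by (simp add: carrier_finite)
  have ps: "\<And>v. v \<in> supp p \<Longrightarrow> set v \<subseteq> A" using p by (auto simp: carrier_iff)
  have "p = fa_eval fa_var p" using fa_eval_var_id[OF fp] by simp
  also have "\<dots> = (\<lambda>u. \<Sum>v\<in>supp p. smul (p v) (word_eval fa_var v) u)"
    by (simp add: fa_eval_supp smul_def)
  finally have "h p = h (\<lambda>u. \<Sum>v\<in>supp p. smul (p v) (word_eval fa_var v) u)" by simp
  also have "\<dots> = (\<lambda>u. \<Sum>v\<in>supp p. h (smul (p v) (word_eval fa_var v)) u)"
    using ps by (intro hom_sum[OF h fp] smul_carrier word_eval_carrier[where A=A]) (auto intro: var_carrier)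
  also have "\<dots> = (\<lambda>u. \<Sum>v\<in>supp p. smul (p v) (word_eval (\<lambda>z. h (fa_var z)) v) u)"
    using ps by (intro ext sum.cong refl) (simp add: hom_smul[OF h] word_eval_carrier[where A=A] var_carrier hom_word[OF h])
  also have "\<dots> = fa_eval (\<lambda>z. h (fa_var z)) p" by (simp add: fa_eval_supp smul_def)
  finally show ?thesis .
qed

lemma comp_hom: "f \<in> fa_hom A B \<Longrightarrow> g \<in> fa_hom B C \<Longrightarrow> fa_comp A g f \<in> fa_hom A C"
  unfolding fa_comp_def fa_hom_def
  by (auto simp: add_carrier mul_carrier Pi_iff)

lemma carrier_empty: "p \<in> fa_carrier {} \<Longrightarrow> p = fa_const (p [])"
  by (rule ext) (auto simp: fa_carrier_def fa_const_def)

locale S =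
  fixes \<Phi> :: "'x set \<Rightarrow> 'x set \<Rightarrow> (('x list \<Rightarrow> 'k::field) \<Rightarrow> ('x list \<Rightarrow> 'k)) \<Rightarrow> (('x list \<Rightarrow> 'k) \<Rightarrow> ('x list \<Rightarrow> 'k))"
    and x0 :: 'x
  assumes auto: "obj_fixing_auto \<Phi>"
    and fixvars: "\<forall>A. finite A \<longrightarrow> (\<forall>x\<in>A. main_fun \<Phi> x0 A (fa_var x) = fa_var x)"
begin

abbreviation s where "s A a \<equiv> main_fun \<Phi> x0 A a"

lemma bij: "finite A \<Longrightarrow> finite B \<Longrightarrow> bij_betw (\<Phi> A B) (fa_hom A B) (fa_hom A B)"
  using auto by (simp add: obj_fixing_auto_def)

lemma Phi_comp: "finite A \<Longrightarrow> finite B \<Longrightarrow> finite C \<Longrightarrow> f \<in> fa_hom A B \<Longrightarrow> g \<in> fa_hom B C \<Longrightarrow>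
        \<Phi> A C (fa_comp A g f) = fa_comp A (\<Phi> B C g) (\<Phi> A B f)"
  using auto by (simp add: obj_fixing_auto_def)

lemma Phi_hom: "finite A \<Longrightarrow> finite B \<Longrightarrow> \<mu> \<in> fa_hom A B \<Longrightarrow> \<Phi> A B \<mu> \<in> fa_hom A B"
  using bij[of A B] by (auto simp: bij_betw_def)

lemma alpha_ev: "alpha x0 a = ev {x0} (\<lambda>_. a)"
  by (simp add: alpha_def ev_def)

lemma alpha_hom: "a \<in> fa_carrier A \<Longrightarrow> alpha x0 a \<in> fa_hom {x0} A"
  unfolding alpha_ev by (rule ev_hom) simp

lemma var0: "fa_var x0 \<in> fa_carrier {x0}" by (simp add: var_carrier)

lemma alpha_var: "alpha x0 a (fa_var x0) = a"
  by (simp add: alpha_def var0)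

lemma s_carrier: "finite A \<Longrightarrow> a \<in> fa_carrier A \<Longrightarrow> s A a \<in> fa_carrier A"
  unfolding main_fun_def using homD(2)[OF Phi_hom[OF _ _ alpha_hom] var0] by simp

lemma hom_from_F1: assumes h: "h \<in> fa_hom {x0} A" shows "h = alpha x0 (h (fa_var x0))"
proof
  fix p
  show "h p = alpha x0 (h (fa_var x0)) p"
  proof (cases "p \<in> fa_carrier {x0}")
    case True
    have "h p = fa_eval (\<lambda>z. h (fa_var z)) p" by (rule hom_eval[OF h True])
    also have "\<dots> = fa_eval (\<lambda>_. h (fa_var x0)) p" by (rule fa_eval_cong[OF True]) simp
    finally show ?thesis using True by (simp add: alpha_def)
  next
    case False
    then show ?thesis using homD(1)[OF h] by (simp add: alpha_def extensional_def)
  qed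
qed

lemma Phi_alpha: "finite A \<Longrightarrow> a \<in> fa_carrier A \<Longrightarrow> \<Phi> {x0} A (alpha x0 a) = alpha x0 (s A a)"
  unfolding main_fun_def by (rule hom_from_F1[OF Phi_hom[OF _ _ alpha_hom]]) auto

lemma comp_alpha: "\<mu> \<in> fa_hom A B \<Longrightarrow> a \<in> fa_carrier A \<Longrightarrow> fa_comp {x0} \<mu> (alpha x0 a) = alpha x0 (\<mu> a)"
  using hom_from_F1[OF comp_hom[OF alpha_hom]] by (simp add: fa_comp_def var0 alpha_var)

lemma nat: assumes A: "finite A" and B: "finite B" and mu: "\<mu> \<in> fa_hom A B" and a: "a \<in> fa_carrier A"
  shows "s B (\<mu> a) = \<Phi> A B \<mu> (s A a)"
proof -
  have "\<Phi> {x0} B (alpha x0 (\<mu> a)) = \<Phi> {x0} B (fa_comp {x0} \<mu> (alpha x0 a))"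
    by (simp add: comp_alpha[OF mu a])
  also have "\<dots> = fa_comp {x0} (\<Phi> A B \<mu>) (\<Phi> {x0} A (alpha x0 a))"
    by (rule Phi_comp[OF _ A B alpha_hom[OF a] mu]) simp
  also have "\<dots> = fa_comp {x0} (\<Phi> A B \<mu>) (alpha x0 (s A a))"
    by (simp add: Phi_alpha[OF A a])
  finally have "\<Phi> {x0} B (alpha x0 (\<mu> a)) (fa_var x0) = fa_comp {x0} (\<Phi> A B \<mu>) (alpha x0 (s A a)) (fa_var x0)"
    by simp
  then show ?thesis by (simp add: main_fun_def fa_comp_def var0 alpha_var)
qed

lemma gen: "finite A \<Longrightarrow> finite B \<Longrightarrow> \<mu> \<in> fa_hom A B \<Longrightarrow> z \<in> A \<Longrightarrow> \<Phi> A B \<mu> (fa_var z) = s B (\<mu> (fa_var z))"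
  using nat[of A B \<mu> "fa_var z"] fixvars by (simp add: var_carrier)

lemma K: assumes A: "finite A" and B: "finite B" and mu: "\<mu> \<in> fa_hom A B" and p: "p \<in> fa_carrier A"
  shows "s B (\<mu> p) = fa_eval (\<lambda>z. s B (\<mu> (fa_var z))) (s A p)"
proof -
  have sp: "s A p \<in> fa_carrier A" by (rule s_carrier[OF A p])
  have "s B (\<mu> p) = \<Phi> A B \<mu> (s A p)" by (rule nat[OF A B mu p])
  also have "\<dots> = fa_eval (\<lambda>z. \<Phi> A B \<mu> (fa_var z)) (s A p)"
    by (rule hom_eval[OF Phi_hom[OF A B mu] sp])
  also have "\<dots> = fa_eval (\<lambda>z. s B (\<mu> (fa_var z))) (s A p)"
    by (rule fa_eval_cong[OF sp]) (simp add: gen[OF A B mu])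
  finally show ?thesis .
qed

lemma s_inj: assumes A: "finite A" and a: "a \<in> fa_carrier A" and b: "b \<in> fa_carrier A" and e: "s A a = s A b"
  shows "a = b"
proof -
  have "\<Phi> {x0} A (alpha x0 a) = \<Phi> {x0} A (alpha x0 b)" using Phi_alpha[OF A a] Phi_alpha[OF A b] e by simp
  then have "alpha x0 a = alpha x0 b"
    using bij[of "{x0}" A] A alpha_hom[OF a] alpha_hom[OF b] by (auto simp: bij_betw_def inj_on_def)
  then show ?thesis using alpha_var[of a] alpha_var[of b] by metis
qed

lemma s_surj: assumes A: "finite A" and b: "b \<in> fa_carrier A"
  shows "\<exists>a\<in>fa_carrier A. s A a = b"
proof -
  have "alpha x0 b \<in> \<Phi> {x0} A ` fa_hom {x0} A" using bij[of "{x0}" A] A alpha_hom[OF b] by (simp add: bij_betw_def)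
  then obtain h where h: "h \<in> fa_hom {x0} A" and e: "\<Phi> {x0} A h = alpha x0 b" by auto
  let ?a = "h (fa_var x0)"
  have a: "?a \<in> fa_carrier A" using homD(2)[OF h var0] .
  have "h = alpha x0 ?a" by (rule hom_from_F1[OF h])
  then have "s A ?a = \<Phi> {x0} A h (fa_var x0)" by (simp add: main_fun_def)
  then have "s A ?a = b" using e alpha_var[of b] by simp
  then show ?thesis using a by blast
qed

definition ts :: "'k \<Rightarrow> 'k" where "ts c = s {} (fa_const c) []"

lemma s_const: assumes A: "finite A" shows "s A (fa_const c) = fa_const (ts c)"
proof -
  let ?mu = "ev {} (\<lambda>_. fa_const 0) :: ('x list \<Rightarrow> 'k) \<Rightarrow> _"
  have mu: "?mu \<in> fa_hom {} A" by (rule ev_hom) simp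
  have e0: "s {} (fa_const c) = fa_const (ts c)"
    using carrier_empty[OF s_carrier[of "{}" "fa_const c"]] by (simp add: ts_def)
  have "s A (?mu (fa_const c)) = fa_eval (\<lambda>z. s A (?mu (fa_var z))) (s {} (fa_const c))"
    by (rule K[OF _ A mu]) auto
  then show ?thesis by (simp add: e0 ev_def)
qed

lemma ts_bij: "bij ts"
proof (rule bijI)
  show "inj ts"
  proof
    fix c d assume "ts c = ts d"
    then have "s {} (fa_const c) = s {} (fa_const d)" using s_const[of "{}"] by simp
    then have "fa_const c = (fa_const d :: 'x list \<Rightarrow> 'k)" by (rule s_inj[rotated 3]) auto
    then show "c = d" by (metis fa_const_def)
  qed
  show "surj ts"
  proof -
    have "k \<in> range ts" for k
    proof -
      obtain a where a: "a \<in> fa_carrier {}" and e: "s {} a = fa_const k"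
        using s_surj[of "{}" "fa_const k"] by auto
      have "ts (a []) = k" using e carrier_empty[OF a] by (simp add: ts_def fa_const_def)
      then show ?thesis by auto
    qed
    then show ?thesis by auto
  qed
qed

end



definition cnt :: "'x \<Rightarrow> 'x list \<Rightarrow> nat" where "cnt a u = length (filter (\<lambda>c. c = a) u)"

fun bn :: "'x \<Rightarrow> 'x list \<Rightarrow> nat" where
  "bn b [] = 0"
| "bn b (c # u) = (if c = b then 2 ^ length u else 0) + bn b u"

definition key :: "'x \<Rightarrow> 'x \<Rightarrow> 'x list \<Rightarrow> nat \<times> nat \<times> nat" where
  "key a b u = (cnt a u, length u, bn b u)"

definition kcat :: "nat \<times> nat \<times> nat \<Rightarrow> nat \<times> nat \<times> nat \<Rightarrow> nat \<times> nat \<times> nat" where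
  "kcat k1 k2 = (case k1 of (c1,l1,b1) \<Rightarrow> case k2 of (c2,l2,b2) \<Rightarrow> (c1 + c2, l1 + l2, b1 * 2 ^ l2 + b2))"

lemma cnt_append[simp]: "cnt a (u @ v) = cnt a u + cnt a v" by (simp add: cnt_def)
lemma cnt_Nil[simp]: "cnt a [] = 0" by (simp add: cnt_def)
lemma cnt_Cons[simp]: "cnt a (c # u) = (if c = a then 1 else 0) + cnt a u" by (simp add: cnt_def)

lemma bn_append: "bn b (u @ v) = bn b u * 2 ^ length v + bn b v"
  by (induction u) (auto simp: power_add algebra_simps)

lemma bn_less: "bn b u < 2 ^ length u"
  by (induction u) auto

lemma key_append: "key a b (u @ v) = kcat (key a b u) (key a b v)"
  by (simp add: key_def kcat_def bn_append)

lemma key_inj: assumes "set u \<subseteq> {a,b}" "set v \<subseteq> {a,b}" "a \<noteq> b" "key a b u = key a b v"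
  shows "u = v"
proof -
  have "length u = length v \<Longrightarrow> bn b u = bn b v \<Longrightarrow> u = v" using assms(1,2)
  proof (induction u arbitrary: v)
    case Nil then show ?case by simp
  next
    case (Cons c u)
    then obtain d v' where v: "v = d # v'" by (cases v) auto
    have l: "length u = length v'" using Cons v by simp
    have e: "(if c = b then 2 ^ length u else 0) + bn b u = (if d = b then 2 ^ length u else 0) + bn b v'"
      using Cons(3) v l by simp
    have lt: "bn b u < 2 ^ length u" "bn b v' < 2 ^ length u" using bn_less[of b u] bn_less[of b v'] l by auto
    have cd: "(c = b) = (d = b)" using e lt by (auto split: if_splits)
    then have "bn b u = bn b v'" using e by (auto split: if_splits)
    moreover have "c = d" using cd Cons(4) Cons(5) v by auto
    ultimately show ?case using Cons l v by auto
  qed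
  then show ?thesis using assms(4) by (simp add: key_def)
qed

lemma kcat_mono_left: "k1 < k1' \<Longrightarrow> kcat k1 k2 < kcat k1' k2"
  by (cases k1; cases k1'; cases k2) (auto simp: kcat_def)

lemma kcat_mono_right: "k2 < k2' \<Longrightarrow> kcat k1 k2 < kcat k1 k2'"
  by (cases k1; cases k2; cases k2') (auto simp: kcat_def)

lemma kcat_le_left: "k1 \<le> k1' \<Longrightarrow> kcat k1 k2 \<le> kcat k1' k2"
  using kcat_mono_left[of k1 k1' k2] by (auto simp: order_le_less)
lemma kcat_le_right: "k2 \<le> k2' \<Longrightarrow> kcat k1 k2 \<le> kcat k1 k2'"
  using kcat_mono_right[of k2 k2' k1] by (auto simp: order_le_less)

definition wdom :: "'x \<Rightarrow> 'x \<Rightarrow> 'x list \<Rightarrow> ('x list \<Rightarrow> 'k::zero) \<Rightarrow> bool" where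
  "wdom a b m p \<longleftrightarrow> (\<forall>v. p v \<noteq> 0 \<longrightarrow> key a b v \<le> key a b m)"

definition W2 :: "'x \<Rightarrow> 'x \<Rightarrow> 'x list set" where "W2 a b = {u. set u \<subseteq> {a,b}}"

lemma dom_mul:
  assumes "wdom a b m1 p" "wdom a b m2 q"
  shows "wdom a b (m1 @ m2) (fa_mul p q)"
  unfolding wdom_def
proof (intro allI impI)
  fix w assume "fa_mul p q w \<noteq> 0"
  then have "w \<in> supp (fa_mul p q)" by (simp add: supp_def)
  then have "w \<in> (\<lambda>(u,v). u @ v) ` (supp p \<times> supp q)" using supp_mul[of p q] by (rule subsetD[rotated])
  then obtain u v where uv: "u \<in> supp p" "v \<in> supp q" "w = u @ v" by auto
  have "key a b u \<le> key a b m1" "key a b v \<le> key a b m2" using assms uv by (auto simp: wdom_def supp_def)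
  then have "kcat (key a b u) (key a b v) \<le> kcat (key a b m1) (key a b m2)"
    by (meson kcat_le_left kcat_le_right order_trans)
  then show "key a b w \<le> key a b (m1 @ m2)" by (simp add: uv key_append)
qed

lemma coeff_mul_lead:
  assumes "wdom a b m1 p" "wdom a b m2 q" "a \<noteq> b"
    and "supp p \<subseteq> W2 a b" "supp q \<subseteq> W2 a b" "m1 \<in> W2 a b" "m2 \<in> W2 a b"
  shows "fa_mul p q (m1 @ m2) = p m1 * q m2"
proof -
  have z: "p u * q v = 0" if "(u,v) \<in> {(u,v). u @ v = m1 @ m2}" "(u,v) \<noteq> (m1,m2)" for u v
  proof (rule ccontr)
    assume nz: "p u * q v \<noteq> 0"
    then have pu: "p u \<noteq> 0" and qv: "q v \<noteq> 0" by auto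
    have ku: "key a b u \<le> key a b m1" and kv: "key a b v \<le> key a b m2" using assms pu qv by (auto simp: wdom_def)
    have uW: "u \<in> W2 a b" "v \<in> W2 a b" using assms(4,5) pu qv by (auto simp: supp_def)
    have kk: "kcat (key a b u) (key a b v) = kcat (key a b m1) (key a b m2)"
      using that(1) by (simp add: key_append[symmetric])
    show False
    proof (cases "key a b u = key a b m1")
      case True
      then have "u = m1" using key_inj[of u a b m1] uW assms(3,6) by (auto simp: W2_def)
      with that have "v \<noteq> m2" by auto
      then have "key a b v \<noteq> key a b m2" using key_inj[of v a b m2] uW assms(3,7) by (auto simp: W2_def)
      then have "key a b v < key a b m2" using kv by simp
      then have "kcat (key a b u) (key a b v) < kcat (key a b m1) (key a b m2)"
        using True kcat_mono_right by simp
      then show False using kk by simp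
    next
      case False
      then have "key a b u < key a b m1" using ku by simp
      then have "kcat (key a b u) (key a b v) < kcat (key a b m1) (key a b v)" by (rule kcat_mono_left)
      also have "\<dots> \<le> kcat (key a b m1) (key a b m2)" using kv by (rule kcat_le_right)
      finally show False using kk by simp
    qed
  qed
  have "fa_mul p q (m1 @ m2) = (\<Sum>x\<in>{(u,v). u @ v = m1 @ m2}. case x of (u,v) \<Rightarrow> p u * q v)"
    by (simp add: fa_mul_alt)
  also have "\<dots> = (\<Sum>x\<in>{(m1,m2)}. case x of (u,v) \<Rightarrow> p u * q v)"
  proof (rule sum.mono_neutral_right[OF finite_splits])
    show "\<forall>x\<in>{(u,v). u @ v = m1 @ m2} - {(m1,m2)}. (case x of (u,v) \<Rightarrow> p u * q v) = 0"
    proof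
      fix x assume x: "x \<in> {(u,v). u @ v = m1 @ m2} - {(m1,m2)}"
      obtain u v where "x = (u,v)" by (cases x)
      then show "(case x of (u,v) \<Rightarrow> p u * q v) = 0" using z[of u v] x by simp
    qed
  qed auto
  finally show ?thesis by simp
qed

definition sub :: "'x \<Rightarrow> 'x list \<Rightarrow> 'x list \<Rightarrow> 'x list" where
  "sub a m u = concat (map (\<lambda>c. if c = a then m else [c]) u)"

lemma sub_Nil[simp]: "sub a m [] = []" by (simp add: sub_def)
lemma sub_Cons[simp]: "sub a m (c # u) = (if c = a then m else [c]) @ sub a m u" by (simp add: sub_def)

lemma cnt_sub: "a \<noteq> b \<Longrightarrow> set u \<subseteq> {a,b} \<Longrightarrow> cnt a (sub a m u) = cnt a u * cnt a m"
  by (induction u) auto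

lemma sub_W2: "m \<in> W2 a b \<Longrightarrow> u \<in> W2 a b \<Longrightarrow> sub a m u \<in> W2 a b"
  by (induction u) (auto simp: W2_def)

definition ly :: "'x \<Rightarrow> 'x list \<Rightarrow> nat" where "ly b t = length (takeWhile (\<lambda>c. c = b) t)"

lemma ly_sub: assumes "a \<noteq> b" "a \<in> set m" shows "set u \<subseteq> {a,b} \<Longrightarrow> a \<in> set u \<Longrightarrow> ly b (sub a m u) = ly b u + ly b m"
proof (induction u)
  case Nil then show ?case by simp
next
  case (Cons c u)
  show ?case
  proof (cases "c = a")
    case True
    then have "ly b (sub a m (c # u)) = ly b m" using assms by (simp add: ly_def)
    then show ?thesis using True assms by (simp add: ly_def)
  next
    case False
    then have "c = b" "a \<in> set u" using Cons by auto
    then show ?thesis using Cons assms by (simp add: ly_def)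
  qed
qed

lemma a_in_sub: "a \<in> set m \<Longrightarrow> a \<in> set (sub a m u) \<longleftrightarrow> a \<in> set u"
  by (induction u) auto

lemma sub_inj: assumes ab: "a \<noteq> b" and am: "a \<in> set m"
  shows "set u \<subseteq> {a,b} \<Longrightarrow> set v \<subseteq> {a,b} \<Longrightarrow> sub a m u = sub a m v \<Longrightarrow> u = v"
proof (induction u arbitrary: v)
  case Nil
  then show ?case using am by (cases v) (auto split: if_splits)
next
  case (Cons c u)
  note prems = Cons.prems and IH = Cons.IH
  have mne: "m \<noteq> []" using am by auto
  show ?case
  proof (cases v)
    case Nil then show ?thesis using prems mne by (auto split: if_splits)
  next
    case (Cons d v')
    note Cons2 = this
    have diff: False if "c = b" "d = a" "set (c#u) \<subseteq> {a,b}" "set (d#v') \<subseteq> {a,b}"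
          "sub a m (c#u) = sub a m (d#v')" for c d u v'
    proof -
      have "a \<in> set (sub a m (d#v'))" using that am by auto
      then have "a \<in> set (sub a m (c#u))" using that by simp
      then have au: "a \<in> set (c#u)" using a_in_sub[OF am] by blast
      have "ly b (sub a m (c#u)) = ly b (c#u) + ly b m" using ly_sub[OF ab am that(3) au] .
      moreover have "ly b (sub a m (d#v')) = ly b (d#v') + ly b m" using ly_sub[OF ab am that(4)] that(2) by simp
      moreover have "ly b (c#u) \<ge> 1" "ly b (d#v') = 0" using that ab by (auto simp: ly_def)
      ultimately show False using that(5) by simp
    qed
    show ?thesis
    proof (cases "c = d")
      case True
      then have "sub a m u = sub a m v'" using prems Cons2 by simp
      then have "u = v'" using IH prems Cons2 by auto
      then show ?thesis using True Cons2 by simp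
    next
      case False
      then have "(c = b \<and> d = a) \<or> (c = a \<and> d = b)" using prems Cons2 by auto
      then show ?thesis
      proof
        assume "c = b \<and> d = a" then show ?thesis using diff[of c d u v'] prems Cons2 by auto
      next
        assume "c = a \<and> d = b" then show ?thesis using diff[of d c v' u] prems Cons2 by auto
      qed
    qed
  qed
qed




lemma key_le_cnt: "key a b v \<le> key a b w \<Longrightarrow> cnt a v \<le> cnt a w"
  by (auto simp: key_def)

lemma W2_append: "u \<in> W2 a b \<Longrightarrow> v \<in> W2 a b \<Longrightarrow> u @ v \<in> W2 a b"
  by (auto simp: W2_def)

lemma supp_mul_W2: "supp p \<subseteq> W2 a b \<Longrightarrow> supp q \<subseteq> W2 a b \<Longrightarrow> supp (fa_mul p q) \<subseteq> W2 a b"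
proof
  fix w assume p: "supp p \<subseteq> W2 a b" and q: "supp q \<subseteq> W2 a b" and w: "w \<in> supp (fa_mul p q)"
  have "w \<in> (\<lambda>(u,v). u @ v) ` (supp p \<times> supp q)" using supp_mul[of p q] w by (rule subsetD)
  then obtain u v where uv: "u \<in> supp p" "v \<in> supp q" "w = u @ v" by auto
  have "u \<in> W2 a b" "v \<in> W2 a b" using p q uv(1,2) by (auto simp only: subset_iff)
  then show "w \<in> W2 a b" using uv(3) by (simp add: W2_append)
qed

lemma we_dom:
  fixes P :: "'x list \<Rightarrow> 'k::field"
  assumes ab: "a \<noteq> b" and dm: "wdom a b m P" and sP: "supp P \<subseteq> W2 a b" and mW: "m \<in> W2 a b"
  shows "u \<in> W2 a b \<Longrightarrow> wdom a b (sub a m u) (word_eval (\<lambda>c. if c = a then P else fa_var c) u)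
     \<and> word_eval (\<lambda>c. if c = a then P else fa_var c) u (sub a m u) = P m ^ cnt a u
     \<and> supp (word_eval (\<lambda>c. if c = a then P else fa_var c) u) \<subseteq> W2 a b"
proof (induction u)
  case Nil
  have "supp (fa_const 1 :: 'x list \<Rightarrow> 'k) \<subseteq> W2 a b" by (auto simp: supp_def fa_const_def W2_def split: if_splits)
  then show ?case by (auto simp: wdom_def fa_const_def split: if_splits)
next
  case (Cons c u)
  let ?\<sigma> = "\<lambda>c. if c = a then P else fa_var c"
  have uW: "u \<in> W2 a b" and c: "c = a \<or> c = b" using Cons.prems by (auto simp: W2_def)
  note IH = Cons.IH[OF uW]
  have subW: "sub a m u \<in> W2 a b" by (rule sub_W2[OF mW uW])
  show ?case
  proof (cases "c = a")
    case True
    have d: "wdom a b (m @ sub a m u) (fa_mul P (word_eval ?\<sigma> u))" using dom_mul[OF dm] IH by blast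
    have v: "fa_mul P (word_eval ?\<sigma> u) (m @ sub a m u) = P m * P m ^ cnt a u"
      using coeff_mul_lead[OF dm _ ab sP _ mW subW] IH by auto
    have sp: "supp (fa_mul P (word_eval ?\<sigma> u)) \<subseteq> W2 a b" using supp_mul_W2[OF sP] IH by blast
    show ?thesis using True d v sp by simp
  next
    case False
    then have cb: "c = b" using c by simp
    have dv: "wdom a b [b] (fa_var b :: 'x list \<Rightarrow> 'k)" by (auto simp: wdom_def fa_var_def split: if_splits)
    have sv: "supp (fa_var b :: 'x list \<Rightarrow> 'k) \<subseteq> W2 a b" by (auto simp: supp_def fa_var_def W2_def split: if_splits)
    have d: "wdom a b ([b] @ sub a m u) (fa_mul (fa_var b) (word_eval ?\<sigma> u))" using dom_mul[OF dv] IH by blast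
    have v: "fa_mul (fa_var b) (word_eval ?\<sigma> u) ([b] @ sub a m u) = 1 * P m ^ cnt a u"
      using coeff_mul_lead[OF dv _ ab sv _ _ subW] IH by (auto simp: fa_var_def W2_def)
    have sp: "supp (fa_mul (fa_var b) (word_eval ?\<sigma> u)) \<subseteq> W2 a b" using supp_mul_W2[OF sv] IH by blast
    show ?thesis using cb ab d v sp by simp
  qed
qed

lemma carrier_W2: "p \<in> fa_carrier {a,b} \<Longrightarrow> supp p \<subseteq> W2 a b"
  by (auto simp: carrier_iff W2_def)

lemma deg_le1:
  fixes F P :: "'x list \<Rightarrow> 'k::field"
  assumes ab: "a \<noteq> b" and F: "F \<in> fa_carrier {a,b}" and P: "P \<in> fa_carrier {a,b}"
    and E: "fa_eval (\<lambda>c. if c = a then P else fa_var c) F = fa_var a"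
  shows "\<forall>u\<in>supp F. cnt a u \<le> 1"
proof (rule ccontr)
  let ?\<sigma> = "\<lambda>c. if c = a then P else fa_var c"
  assume "\<not> (\<forall>u\<in>supp F. cnt a u \<le> 1)"
  then obtain u0 where u0: "u0 \<in> supp F" "cnt a u0 \<ge> 2" by auto
  have sF: "supp F \<subseteq> W2 a b" and fF: "finite (supp F)" using F by (auto simp: carrier_W2 carrier_finite)
  have sP: "supp P \<subseteq> W2 a b" and fP: "finite (supp P)" using P by (auto simp: carrier_W2 carrier_finite)
  obtain m where mW: "m \<in> W2 a b" and dm: "wdom a b m P" and mc: "(supp P = {} \<and> m = []) \<or> m \<in> supp P"
  proof (cases "supp P = {}")
    case True
    then show ?thesis using that[of "[]"] by (auto simp: wdom_def supp_def W2_def)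
  next
    case False
    let ?M = "Max (key a b ` supp P)"
    have "?M \<in> key a b ` supp P" using False fP by simp
    then obtain m where m: "m \<in> supp P" "key a b m = ?M" by auto
    have "wdom a b m P" unfolding wdom_def using fP m(2) by (auto simp: supp_def)
    then show ?thesis using that[of m] m sP by auto
  qed
  have WE: "\<And>u. u \<in> W2 a b \<Longrightarrow> wdom a b (sub a m u) (word_eval ?\<sigma> u)
     \<and> word_eval ?\<sigma> u (sub a m u) = P m ^ cnt a u" using we_dom[OF ab dm sP mW] by blast
  have ev: "fa_eval ?\<sigma> F t = (\<Sum>u\<in>supp F. F u * word_eval ?\<sigma> u t)" for t
    by (simp add: fa_eval_supp)
  show False
  proof (cases "cnt a m = 0")
    case True
    have "word_eval ?\<sigma> u [a] = 0" if u: "u \<in> supp F" for u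
    proof (rule ccontr)
      assume "word_eval ?\<sigma> u [a] \<noteq> 0"
      then have "key a b [a] \<le> key a b (sub a m u)" using WE[of u] u sF by (auto simp: wdom_def)
      then have "cnt a [a] \<le> cnt a (sub a m u)" by (rule key_le_cnt)
      moreover have "cnt a (sub a m u) = 0" using cnt_sub[OF ab, of u m] u sF True by (auto simp: W2_def)
      ultimately show False by simp
    qed
    then have "fa_eval ?\<sigma> F [a] = 0" unfolding ev by simp
    then show False using E by (simp add: fa_var_def)
  next
    case False
    then have am: "a \<in> set m" by (auto simp: cnt_def filter_empty_conv)
    then have mP: "m \<in> supp P" using mc by auto
    let ?k = "\<lambda>u. key a b (sub a m u)"
    let ?M = "Max (?k ` supp F)"
    have "?M \<in> ?k ` supp F" using u0 fF by (intro Max_in) auto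
    then obtain us where us: "us \<in> supp F" "?k us = ?M" by auto
    have kmax: "?k u \<le> ?k us" if "u \<in> supp F" for u using that fF us(2) by simp
    have z: "F u * word_eval ?\<sigma> u (sub a m us) = 0" if u: "u \<in> supp F - {us}" for u
    proof -
      have uW: "u \<in> W2 a b" and usW: "us \<in> W2 a b" using u us sF by auto
      have "sub a m u \<noteq> sub a m us" using sub_inj[OF ab am, of u us] uW usW u by (auto simp: W2_def)
      then have "?k u \<noteq> ?k us" using key_inj[of "sub a m u" a b "sub a m us"] sub_W2[OF mW uW] sub_W2[OF mW usW] ab
        by (auto simp: W2_def)
      moreover have "?k u \<le> ?k us" using kmax u by simp
      ultimately have lt: "?k u < ?k us" by simp
      have "word_eval ?\<sigma> u (sub a m us) = 0"
      proof (rule ccontr)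
        assume "word_eval ?\<sigma> u (sub a m us) \<noteq> 0"
        then have "?k us \<le> ?k u" using WE[OF uW] by (auto simp: wdom_def)
        then show False using lt by simp
      qed
      then show ?thesis by simp
    qed
    have "fa_eval ?\<sigma> F (sub a m us) = F us * word_eval ?\<sigma> us (sub a m us) + (\<Sum>u\<in>supp F - {us}. F u * word_eval ?\<sigma> u (sub a m us))"
      unfolding ev using us(1) fF by (simp add: sum.remove)
    also have "\<dots> = F us * P m ^ cnt a us"
    proof -
      have "(\<Sum>u\<in>supp F - {us}. F u * word_eval ?\<sigma> u (sub a m us)) = 0"
        by (rule sum.neutral) (simp add: z)
      moreover have "word_eval ?\<sigma> us (sub a m us) = P m ^ cnt a us" using WE[of us] us sF by auto
      ultimately show ?thesis by simp
    qed
    finally have "fa_eval ?\<sigma> F (sub a m us) \<noteq> 0" using us(1) mP by (simp add: supp_def)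
    then have "sub a m us = [a]" using E by (simp add: fa_var_def split: if_splits)
    then have "cnt a (sub a m us) = 1" by simp
    moreover have "cnt a (sub a m u0) \<le> cnt a (sub a m us)" using kmax[OF u0(1)] by (rule key_le_cnt)
    moreover have "cnt a (sub a m u0) = cnt a u0 * cnt a m" using cnt_sub[OF ab, of u0 m] u0 sF by (auto simp: W2_def)
    moreover have "cnt a u0 * cnt a m \<ge> cnt a u0" using False by simp
    ultimately show False using u0(2) by linarith
  qed
qed




lemma mul_short:
  assumes "\<And>v. length v \<ge> 2 \<Longrightarrow> f v = 0"
  shows "fa_mul f h t = f [] * h t + (case t of [] \<Rightarrow> 0 | d # t' \<Rightarrow> f [d] * h t')"
proof (cases t)
  case Nil then show ?thesis by simp
next
  case (Cons d t')
  have "fa_mul f h t = (\<Sum>i\<in>{0,1}. f (take i t) * h (drop i t))"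
    unfolding fa_mul_def
  proof (rule sum.mono_neutral_right)
    show "\<forall>i\<in>{..length t} - {0, 1}. f (take i t) * h (drop i t) = 0"
      using assms by (auto simp: Cons)
  qed (auto simp: Cons)
  then show ?thesis by (simp add: Cons)
qed

fun repl :: "'x \<Rightarrow> 'x \<Rightarrow> 'x \<Rightarrow> 'x \<Rightarrow> 'x list \<Rightarrow> 'x list" where
  "repl q p' q1 q2 [] = []"
| "repl q p' q1 q2 (c # u) = (if c = q then q1 # map (\<lambda>e. if e = q then q2 else p') u else p' # repl q p' q1 q2 u)"

lemma cnt_map_two: "e \<noteq> f \<Longrightarrow> cnt e (map (\<lambda>x. if x = q then e else f) u) = cnt q u"
  by (induction u) auto

context
  fixes p q p' q1 q2 :: 'x and c0 :: "'k::field"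
  assumes pq: "p \<noteq> q" and d1: "p' \<noteq> q1" and d2: "p' \<noteq> q2" and d3: "q1 \<noteq> q2"
begin

definition sg :: "'x \<Rightarrow> 'x list \<Rightarrow> 'k" where
  "sg c = (if c = q then fa_sub (fa_add (fa_var q1) (fa_var q2)) (fa_const c0) else fa_var p')"

definition gg :: "'x \<Rightarrow> 'x" where "gg d = (if d = q1 \<or> d = q2 then q else p)"

lemma sg_short: "length v \<ge> 2 \<Longrightarrow> sg c v = 0"
  by (auto simp: sg_def fa_sub_def fa_add_def fa_var_def fa_const_def)

lemma we_lin: "set u \<subseteq> {p,q} \<Longrightarrow>
   (\<forall>t. word_eval sg u t \<noteq> 0 \<longrightarrow> length t \<le> length u \<and> cnt q1 t + cnt q2 t \<le> cnt q u)
 \<and> (\<forall>t. length t = length u \<longrightarrow> word_eval sg u t = (if set t \<subseteq> {p',q1,q2} \<and> map gg t = u then 1 else 0))"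
proof (induction u)
  case Nil
  show ?case by (auto simp: fa_const_def)
next
  case (Cons c u)
  have uS: "set u \<subseteq> {p,q}" and c: "c = p \<or> c = q" using Cons.prems by auto
  note IH = Cons.IH[OF uS]
  let ?h = "word_eval sg u"
  have ms: "fa_mul (sg c) ?h t = sg c [] * ?h t + (case t of [] \<Rightarrow> 0 | d # t' \<Rightarrow> sg c [d] * ?h t')" for t
    by (rule mul_short) (rule sg_short)
  show ?case
  proof (cases "c = q")
    case True
    have s0: "sg c [] = - c0" and s1: "sg c [d] = (if d = q1 then 1 else 0) + (if d = q2 then 1 else 0)" for d
      using True by (auto simp: sg_def fa_sub_def fa_add_def fa_var_def fa_const_def)
    have form: "word_eval sg (c # u) (d # t') = - c0 * ?h (d # t') + ((if d = q1 then 1 else 0) + (if d = q2 then 1 else 0)) * ?h t'" for d t'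
      using ms[of "d # t'"] by (simp add: s0 s1)
    have P1: "length t \<le> length (c # u) \<and> cnt q1 t + cnt q2 t \<le> cnt q (c # u)" if nz: "word_eval sg (c # u) t \<noteq> 0" for t
    proof (cases t)
      case Nil then show ?thesis by simp
    next
      case (Cons d t')
      show ?thesis
      proof (cases "?h t = 0")
        case False
        then show ?thesis using IH True by auto
      next
        case True2: True
        then have "((if d = q1 then 1 else 0) + (if d = q2 then 1 else 0)) * ?h t' \<noteq> 0"
          using nz form[of d t'] Cons by simp
        then have t: "?h t' \<noteq> 0" "d = q1 \<or> d = q2" by (auto split: if_splits)
        then show ?thesis using IH True d3 Cons by auto
      qed
    qed
    have P2: "word_eval sg (c # u) t = (if set t \<subseteq> {p',q1,q2} \<and> map gg t = c # u then 1 else 0)"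
      if l: "length t = length (c # u)" for t
    proof -
      obtain d t' where t: "t = d # t'" using l by (cases t) auto
      have "?h t = 0" using IH l by (metis Suc_n_not_le_n length_Cons)
      then have "word_eval sg (c # u) t = ((if d = q1 then 1 else 0) + (if d = q2 then 1 else 0)) * ?h t'"
        using form[of d t'] t by simp
      also have "\<dots> = (if set t \<subseteq> {p',q1,q2} \<and> map gg t = c # u then 1 else 0)"
        using IH l t True d1 d2 d3 pq by (auto simp: gg_def)
      finally show ?thesis .
    qed
    show ?thesis using P1 P2 by blast
  next
    case False
    then have cp: "c = p" using c by simp
    have sc: "sg c = fa_var p'" using False by (simp add: sg_def)
    have P1: "length t \<le> length (c # u) \<and> cnt q1 t + cnt q2 t \<le> cnt q (c # u)" if nz: "word_eval sg (c # u) t \<noteq> 0" for t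
    proof -
      have "word_eval sg (c # u) t = (case t of [] \<Rightarrow> 0 | d # t' \<Rightarrow> if d = p' then ?h t' else 0)"
        by (simp add: sc fa_mul_var_left)
      then obtain t' where t: "t = p' # t'" "?h t' \<noteq> 0" using nz by (cases t) (auto split: if_splits)
      then show ?thesis using IH d1 d2 by auto
    qed
    have P2: "word_eval sg (c # u) t = (if set t \<subseteq> {p',q1,q2} \<and> map gg t = c # u then 1 else 0)"
      if l: "length t = length (c # u)" for t
    proof -
      obtain d t' where t: "t = d # t'" using l by (cases t) auto
      have ev: "word_eval sg (c # u) t = (if d = p' then ?h t' else 0)"
        by (simp add: sc fa_mul_var_left t)
      have ih: "?h t' = (if set t' \<subseteq> {p',q1,q2} \<and> map gg t' = u then 1 else 0)" using IH l t by simp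
      show ?thesis
      proof (cases "d = p'")
        case True
        have "gg p' = p" using d1 d2 by (simp add: gg_def)
        then show ?thesis unfolding ev using True by (simp add: ih t cp)
      next
        case False
        have "\<not> (set t \<subseteq> {p',q1,q2} \<and> map gg t = c # u)"
        proof
          assume h: "set t \<subseteq> {p',q1,q2} \<and> map gg t = c # u"
          then have "d = q1 \<or> d = q2" using False t by auto
          then have "gg d = q" by (simp add: gg_def)
          moreover have "gg d = p" using h t cp by simp
          ultimately show False using pq by simp
        qed
        then show ?thesis unfolding ev using False by simp
      qed
    qed
    show ?thesis using P1 P2 by blast
  qed
qed


lemma repl_props: "set u \<subseteq> {p,q} \<Longrightarrow> length (repl q p' q1 q2 u) = length u
   \<and> set (repl q p' q1 q2 u) \<subseteq> {p',q1,q2} \<and> map gg (repl q p' q1 q2 u) = u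
   \<and> (cnt q u \<ge> 2 \<longrightarrow> q1 \<in> set (repl q p' q1 q2 u) \<and> q2 \<in> set (repl q p' q1 q2 u))
   \<and> cnt q1 (repl q p' q1 q2 u) + cnt q2 (repl q p' q1 q2 u) = cnt q u"
proof (induction u)
  case Nil then show ?case by simp
next
  case (Cons c u)
  then have uS: "set u \<subseteq> {p,q}" and c: "c = p \<or> c = q" by auto
  note IH = Cons.IH[OF uS]
  show ?case
  proof (cases "c = q")
    case True
    have m1: "map gg (map (\<lambda>e. if e = q then q2 else p') u) = u"
      using uS d1 d2 d3 pq by (induction u) (auto simp: gg_def)
    have m2: "set (map (\<lambda>e. if e = q then q2 else p') u) \<subseteq> {p',q1,q2}" by auto
    have m3: "cnt q1 (map (\<lambda>e. if e = q then q2 else p') u) = 0"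
      using d1 d3 by (induction u) auto
    have m4: "cnt q2 (map (\<lambda>e. if e = q then q2 else p') u) = cnt q u"
      using cnt_map_two[of q2 p' q u] d2 by auto
    have m5: "cnt q u \<ge> 1 \<Longrightarrow> q2 \<in> set (map (\<lambda>e. if e = q then q2 else p') u)"
      by (induction u) (auto split: if_splits)
    have g1: "gg q1 = q" by (simp add: gg_def)
    show ?thesis using True m1 m2 m3 m4 m5 d1 d2 d3 pq g1 by auto
  next
    case False
    then have "c = p" using c by simp
    then show ?thesis using IH False d1 d2 pq by (auto simp: gg_def)
  qed
qed

lemma mixed:
  fixes F :: "'x list \<Rightarrow> 'k"
  assumes F: "F \<in> fa_carrier {p,q}"
    and E: "fa_eval sg F = fa_sub (fa_add (fa_eval (\<lambda>c. if c = q then fa_var q1 else fa_var p') F)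
                                         (fa_eval (\<lambda>c. if c = q then fa_var q2 else fa_var p') F)) (fa_const c0)"
  shows "\<forall>u\<in>supp F. cnt q u \<le> 1"
proof (rule ccontr)
  assume "\<not> (\<forall>u\<in>supp F. cnt q u \<le> 1)"
  then obtain u1 where u1: "u1 \<in> supp F" "cnt q u1 \<ge> 2" by auto
  have fF: "finite (supp F)" and sF: "\<And>u. u \<in> supp F \<Longrightarrow> set u \<subseteq> {p,q}" using F by (auto simp: carrier_iff)
  let ?U = "{u\<in>supp F. cnt q u \<ge> 2}"
  have fU: "finite ?U" using fF by simp
  let ?L = "Max (length ` ?U)"
  have "?L \<in> length ` ?U" using fU u1 by (intro Max_in) auto
  then obtain u0 where u0: "u0 \<in> supp F" "cnt q u0 \<ge> 2" "length u0 = ?L" by auto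
  have Lmax: "length u \<le> ?L" if "u \<in> supp F" "cnt q u \<ge> 2" for u using that fU by simp
  let ?W = "repl q p' q1 q2 u0"
  have R: "length ?W = length u0" "set ?W \<subseteq> {p',q1,q2}" "map gg ?W = u0"
    "q1 \<in> set ?W" "q2 \<in> set ?W" "cnt q1 ?W + cnt q2 ?W = cnt q u0"
    using repl_props[OF sF[OF u0(1)]] u0(2) by auto
  have WL: "\<And>u. set u \<subseteq> {p,q} \<Longrightarrow>
   (\<forall>t. word_eval sg u t \<noteq> 0 \<longrightarrow> length t \<le> length u \<and> cnt q1 t + cnt q2 t \<le> cnt q u)
 \<and> (\<forall>t. length t = length u \<longrightarrow> word_eval sg u t = (if set t \<subseteq> {p',q1,q2} \<and> map gg t = u then 1 else 0))"
    by (rule we_lin)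
  have z: "word_eval sg u ?W = 0" if u: "u \<in> supp F - {u0}" for u
  proof (rule ccontr)
    assume nz: "word_eval sg u ?W \<noteq> 0"
    have uS: "set u \<subseteq> {p,q}" using u sF by auto
    note W = WL[OF uS]
    have l1: "length ?W \<le> length u" and c1: "cnt q1 ?W + cnt q2 ?W \<le> cnt q u" using W nz by auto
    show False
    proof (cases "length u = length u0")
      case True
      then have "word_eval sg u ?W = (if set ?W \<subseteq> {p',q1,q2} \<and> map gg ?W = u then 1 else 0)"
        using W R(1) by simp
      then show False using nz R u by auto
    next
      case False
      then have "length u > ?L" using l1 R(1) u0(3) by simp
      then have "cnt q u < 2" using Lmax[of u] u by fastforce
      then show False using c1 R(6) u0(2) by simp
    qed
  qed
  have w0: "word_eval sg u0 ?W = 1" using WL[OF sF[OF u0(1)]] R by simp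
  have "fa_eval sg F ?W = F u0 * word_eval sg u0 ?W + (\<Sum>u\<in>supp F - {u0}. F u * word_eval sg u ?W)"
    unfolding fa_eval_supp using u0(1) fF by (simp add: sum.remove)
  also have "\<dots> = F u0" using z w0 by simp
  finally have lhs: "fa_eval sg F ?W = F u0" .
  have c1: "fa_eval (\<lambda>c. if c = q then fa_var q1 else fa_var p') F \<in> fa_carrier {p',q1}"
    by (rule fa_eval_carrier[OF F]) (auto intro: var_carrier)
  have c2: "fa_eval (\<lambda>c. if c = q then fa_var q2 else fa_var p') F \<in> fa_carrier {p',q2}"
    by (rule fa_eval_carrier[OF F]) (auto intro: var_carrier)
  have e1: "fa_eval (\<lambda>c. if c = q then fa_var q1 else fa_var p') F ?W = 0"
  proof (rule ccontr)
    assume "fa_eval (\<lambda>c. if c = q then fa_var q1 else fa_var p') F ?W \<noteq> 0"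
    then have "set ?W \<subseteq> {p',q1}" using carrierD[OF c1] by blast
    then show False using R(5) d2 d3 by auto
  qed
  have e2: "fa_eval (\<lambda>c. if c = q then fa_var q2 else fa_var p') F ?W = 0"
  proof (rule ccontr)
    assume "fa_eval (\<lambda>c. if c = q then fa_var q2 else fa_var p') F ?W \<noteq> 0"
    then have "set ?W \<subseteq> {p',q2}" using carrierD[OF c2] by blast
    then show False using R(4) d1 d3 by auto
  qed
  have e3: "fa_const c0 ?W = 0" using R(4) by (auto simp: fa_const_def)
  have "fa_eval sg F ?W = 0" unfolding E using e1 e2 e3 by (simp add: fa_sub_def fa_add_def)
  then show False using lhs u0(1) by (simp add: supp_def)
qed

end




lemma len_cnt2: "x \<noteq> y \<Longrightarrow> set u \<subseteq> {x,y} \<Longrightarrow> length u = cnt x u + cnt y u"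
  by (induction u) auto

lemma words5: assumes "x \<noteq> y" "set u \<subseteq> {x,y}" "cnt x u \<le> 1" "cnt y u \<le> 1"
  shows "u \<in> {[], [x], [y], [x,y], [y,x]}"
proof -
  have "length u \<le> 2" using len_cnt2[OF assms(1,2)] assms(3,4) by simp
  then consider "u = []" | a where "u = [a]" | a b where "u = [a,b]"
    by (cases u; cases "tl u"; auto)
  then show ?thesis using assms by cases (auto split: if_splits)
qed

lemma finite_supp_var[simp]: "finite (supp (fa_var a :: 'x list \<Rightarrow> 'k::field))"
  using var_carrier[of a "{a}"] carrier_finite by blast

lemma finite_supp_const[simp]: "finite (supp (fa_const a :: 'x list \<Rightarrow> 'k::field))"
  using const_carrier[of a "{}"] carrier_finite by blast

context S
begin

lemma KE: assumes A: "finite A" and B: "finite B" and sig: "\<And>a. a \<in> A \<Longrightarrow> \<sigma> a \<in> fa_carrier B"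
  and p: "p \<in> fa_carrier A"
  shows "s B (fa_eval \<sigma> p) = fa_eval (\<lambda>z. s B (\<sigma> z)) (s A p)"
proof -
  have mu: "ev A \<sigma> \<in> fa_hom A B" by (rule ev_hom[OF sig])
  have "s B (ev A \<sigma> p) = fa_eval (\<lambda>z. s B (ev A \<sigma> (fa_var z))) (s A p)" by (rule K[OF A B mu p])
  also have "\<dots> = fa_eval (\<lambda>z. s B (\<sigma> z)) (s A p)"
    by (rule fa_eval_cong[OF s_carrier[OF A p]]) (simp add: ev_def var_carrier)
  finally show ?thesis using p by (simp add: ev_def)
qed

end

locale S3 = S \<Phi> x0
  for \<Phi> :: "'x set \<Rightarrow> 'x set \<Rightarrow> (('x list \<Rightarrow> 'k::field) \<Rightarrow> ('x list \<Rightarrow> 'k)) \<Rightarrow> (('x list \<Rightarrow> 'k) \<Rightarrow> ('x list \<Rightarrow> 'k))"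
    and x0 :: 'x +
  fixes x y z :: 'x
  assumes xy: "x \<noteq> y" and xz: "x \<noteq> z" and yz: "y \<noteq> z"
begin

definition pair :: "('x list \<Rightarrow> 'k) \<Rightarrow> ('x list \<Rightarrow> 'k) \<Rightarrow> 'x \<Rightarrow> ('x list \<Rightarrow> 'k)" where
  "pair u v = (\<lambda>c. if c = x then u else v)"

lemma G1:
  fixes op :: "('x list \<Rightarrow> 'k::field) \<Rightarrow> ('x list \<Rightarrow> 'k) \<Rightarrow> ('x list \<Rightarrow> 'k)"
  assumes opc: "\<And>A p q. p \<in> fa_carrier A \<Longrightarrow> q \<in> fa_carrier A \<Longrightarrow> op p q \<in> fa_carrier A"
    and ope: "\<And>\<sigma> p q. finite (supp p) \<Longrightarrow> finite (supp q) \<Longrightarrow> fa_eval \<sigma> (op p q) = op (fa_eval \<sigma> p) (fa_eval \<sigma> q)"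
    and B: "finite B" and u: "u \<in> fa_carrier B" and v: "v \<in> fa_carrier B"
  shows "s B (op u v) = fa_eval (pair (s B u) (s B v)) (s {x,y} (op (fa_var x) (fa_var y)))"
proof -
  have pc: "op (fa_var x) (fa_var y) \<in> fa_carrier {x,y}" by (intro opc var_carrier) auto
  have "fa_eval (pair u v) (op (fa_var x) (fa_var y)) = op u v"
    using xy by (simp add: ope pair_def)
  then have "s B (op u v) = s B (fa_eval (pair u v) (op (fa_var x) (fa_var y)))" by simp
  also have "\<dots> = fa_eval (\<lambda>c. s B (pair u v c)) (s {x,y} (op (fa_var x) (fa_var y)))"
    by (rule KE[OF _ B _ pc]) (use u v in \<open>auto simp: pair_def\<close>)
  also have "\<dots> = fa_eval (pair (s B u) (s B v)) (s {x,y} (op (fa_var x) (fa_var y)))"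
    by (rule fa_eval_cong[OF s_carrier[OF _ pc]]) (auto simp: pair_def)
  finally show ?thesis .
qed

lemmas G1add = G1[of fa_add, OF add_carrier fa_eval_add]
lemmas G1mul = G1[of fa_mul, OF mul_carrier fa_eval_mul]

lemma svar: "finite B \<Longrightarrow> a \<in> B \<Longrightarrow> s B (fa_var a) = fa_var a"
  using fixvars by auto

abbreviation "S5 \<equiv> {[], [x], [y], [x,y], [y,x]}"

lemma eval5: fixes F :: "'x list \<Rightarrow> 'k" assumes "supp F \<subseteq> S5"
  shows "fa_eval \<sigma> F t = F [] * fa_const 1 t + F [x] * \<sigma> x t + F [y] * \<sigma> y t
     + F [x,y] * fa_mul (\<sigma> x) (\<sigma> y) t + F [y,x] * fa_mul (\<sigma> y) (\<sigma> x) t"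
  using assms xy by (subst fa_eval_superset[of S5]) auto

lemma ind5: fixes F :: "'x list \<Rightarrow> 'k" assumes "supp F \<subseteq> S5"
  shows "F t = (if t = [] then F [] else 0) + (if t = [x] then F [x] else 0) + (if t = [y] then F [y] else 0)
     + (if t = [x,y] then F [x,y] else 0) + (if t = [y,x] then F [y,x] else 0)"
proof (cases "t \<in> S5")
  case True
  then show ?thesis using xy by auto
next
  case False
  then have "F t = 0" using assms by (metis (mono_tags) mem_Collect_eq subsetD supp_def)
  then show ?thesis using False by auto
qed

end



context S3
begin

definition wA where "wA = s {x,y} (fa_add (fa_var x) (fa_var y))"

lemma wA_carrier: "wA \<in> fa_carrier {x,y}"
  unfolding wA_def by (intro s_carrier add_carrier var_carrier) auto

lemma fin2: "finite {x,y}" by simp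

lemma wA_S5: "supp wA \<subseteq> S5"
proof -
  let ?P = "s {x,y} (fa_sub (fa_var x) (fa_var y))"
  let ?Q = "s {x,y} (fa_sub (fa_var y) (fa_var x))"
  have Pc: "?P \<in> fa_carrier {x,y}" by (intro s_carrier sub_carrier var_carrier) auto
  have Qc: "?Q \<in> fa_carrier {y,x}" using s_carrier[of "{x,y}" "fa_sub (fa_var y) (fa_var x)"]
    by (auto simp: insert_commute intro: sub_carrier var_carrier)
  have e1: "fa_add (fa_sub (fa_var x) (fa_var y)) (fa_var y) = (fa_var x :: 'x list \<Rightarrow> 'k)"
    by (auto simp: fa_add_def fa_sub_def)
  have "s {x,y} (fa_add (fa_sub (fa_var x) (fa_var y)) (fa_var y)) = fa_eval (pair ?P (s {x,y} (fa_var y))) wA"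
    unfolding wA_def by (rule G1add) (auto intro: sub_carrier var_carrier)
  then have "fa_var x = fa_eval (pair ?P (fa_var y)) wA" by (simp add: e1 svar)
  also have "\<dots> = fa_eval (\<lambda>c. if c = x then ?P else fa_var c) wA"
    by (rule fa_eval_cong[OF wA_carrier]) (auto simp: pair_def)
  finally have E1: "fa_eval (\<lambda>c. if c = x then ?P else fa_var c) wA = fa_var x" ..
  have c1: "\<forall>u\<in>supp wA. cnt x u \<le> 1" by (rule deg_le1[OF xy wA_carrier Pc E1])
  have e2: "fa_add (fa_var x) (fa_sub (fa_var y) (fa_var x)) = (fa_var y :: 'x list \<Rightarrow> 'k)"
    by (auto simp: fa_add_def fa_sub_def)
  have "s {x,y} (fa_add (fa_var x) (fa_sub (fa_var y) (fa_var x))) = fa_eval (pair (s {x,y} (fa_var x)) ?Q) wA"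
    unfolding wA_def by (rule G1add) (auto intro: sub_carrier var_carrier)
  then have "fa_var y = fa_eval (pair (fa_var x) ?Q) wA" by (simp add: e2 svar)
  also have "\<dots> = fa_eval (\<lambda>c. if c = y then ?Q else fa_var c) wA"
    by (rule fa_eval_cong[OF wA_carrier]) (auto simp: pair_def xy)
  finally have E2: "fa_eval (\<lambda>c. if c = y then ?Q else fa_var c) wA = fa_var y" ..
  have wc': "wA \<in> fa_carrier {y,x}" using wA_carrier by (simp add: insert_commute)
  have c2: "\<forall>u\<in>supp wA. cnt y u \<le> 1" by (rule deg_le1[OF xy[symmetric] wc' Qc E2])
  show ?thesis
  proof
    fix u assume u: "u \<in> supp wA"
    have "set u \<subseteq> {x,y}" using wA_carrier u by (auto simp: carrier_iff)
    then show "u \<in> S5" using words5[OF xy] c1 c2 u by blast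
  qed
qed

lemma assoc_id:
  fixes op :: "('x list \<Rightarrow> 'k) \<Rightarrow> ('x list \<Rightarrow> 'k) \<Rightarrow> ('x list \<Rightarrow> 'k)"
  assumes opc: "\<And>A p q. p \<in> fa_carrier A \<Longrightarrow> q \<in> fa_carrier A \<Longrightarrow> op p q \<in> fa_carrier A"
    and ope: "\<And>\<sigma> p q. finite (supp p) \<Longrightarrow> finite (supp q) \<Longrightarrow> fa_eval \<sigma> (op p q) = op (fa_eval \<sigma> p) (fa_eval \<sigma> q)"
    and opa: "\<And>a b c. op (op a b) c = op a (op b c)"
  defines "W \<equiv> s {x,y} (op (fa_var x) (fa_var y))"
  shows "fa_eval (pair W (fa_var z)) W = fa_eval (pair (fa_var x) (fa_eval (pair (fa_var y) (fa_var z)) W)) W"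
proof -
  let ?B = "{x,y,z}"
  have fB: "finite ?B" by simp
  have vx: "fa_var x \<in> fa_carrier ?B" and vy: "fa_var y \<in> fa_carrier ?B" and vz: "fa_var z \<in> fa_carrier ?B"
    by (auto intro: var_carrier)
  have Wc: "W \<in> fa_carrier {x,y}" unfolding W_def by (intro s_carrier opc var_carrier) auto
  have G: "s ?B (op u v) = fa_eval (pair (s ?B u) (s ?B v)) W" if "u \<in> fa_carrier ?B" "v \<in> fa_carrier ?B" for u v
    unfolding W_def
    apply (rule G1[where op=op])
        apply (rule opc; assumption)
       apply (rule ope; assumption)
      apply (rule fB)
     apply (rule that(1))
    apply (rule that(2))
    done
  have sxy: "s ?B (op (fa_var x) (fa_var y)) = W"
  proof -
    have "s ?B (op (fa_var x) (fa_var y)) = fa_eval (pair (fa_var x) (fa_var y)) W"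
      using G[OF vx vy] by (simp add: svar)
    also have "\<dots> = fa_eval fa_var W" by (rule fa_eval_cong[OF Wc]) (auto simp: pair_def)
    also have "\<dots> = W" using Wc by (simp add: fa_eval_var_id carrier_finite)
    finally show ?thesis .
  qed
  have syz: "s ?B (op (fa_var y) (fa_var z)) = fa_eval (pair (fa_var y) (fa_var z)) W"
    using G[OF vy vz] by (simp add: svar)
  have "s ?B (op (op (fa_var x) (fa_var y)) (fa_var z)) = fa_eval (pair W (fa_var z)) W"
    using G[OF opc[OF vx vy] vz] by (simp add: svar sxy)
  moreover have "s ?B (op (fa_var x) (op (fa_var y) (fa_var z))) = fa_eval (pair (fa_var x) (fa_eval (pair (fa_var y) (fa_var z)) W)) W"
    using G[OF vx opc[OF vy vz]] by (simp add: svar syz)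
  ultimately show ?thesis by (simp add: opa)
qed

lemma out5: fixes F :: "'x list \<Rightarrow> 'k" assumes "supp F \<subseteq> S5" shows "t \<notin> S5 \<Longrightarrow> F t = 0"
  using assms by (auto simp: supp_def)

lemma assoc_coef:
  fixes F :: "'x list \<Rightarrow> 'k"
  assumes S: "supp F \<subseteq> S5"
    and E: "fa_eval (pair F (fa_var z)) F = fa_eval (pair (fa_var x) (fa_eval (pair (fa_var y) (fa_var z)) F)) F"
  shows "F [x,y] * F [y,x] = 0"
proof -
  have "fa_eval (pair F (fa_var z)) F [y,x,z] = fa_eval (pair (fa_var x) (fa_eval (pair (fa_var y) (fa_var z)) F)) F [y,x,z]"
    using E by simp
  then show ?thesis
    using xy xz yz
    by (simp add: eval5[OF S] pair_def fa_mul_1 fa_mul_2 fa_mul_3 fa_var_def fa_const_def out5[OF S])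
qed

end



lemma finite_supp_add[simp]: "finite (supp p) \<Longrightarrow> finite (supp q) \<Longrightarrow> finite (supp (fa_add p q))"
  by (rule finite_subset[of _ "supp p \<union> supp q"]) (auto simp: supp_def fa_add_def)
lemma finite_supp_sub[simp]: "finite (supp p) \<Longrightarrow> finite (supp q) \<Longrightarrow> finite (supp (fa_sub p q))"
  by (rule finite_subset[of _ "supp p \<union> supp q"]) (auto simp: supp_def fa_sub_def)
lemma finite_supp_mul[simp]: "finite (supp p) \<Longrightarrow> finite (supp q) \<Longrightarrow> finite (supp (fa_mul p q))"
  by (rule finite_subset[OF supp_mul]) simp

context S3
begin

lemma G1add': "finite B \<Longrightarrow> u \<in> fa_carrier B \<Longrightarrow> v \<in> fa_carrier B \<Longrightarrow>
   s B (fa_add u v) = fa_eval (pair (s B u) (s B v)) wA"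
  unfolding wA_def
  apply (rule G1[where op=fa_add])
      apply (rule add_carrier; assumption)
     apply (rule fa_eval_add; assumption)
    apply assumption+
  done

lemma G1mul': "finite B \<Longrightarrow> u \<in> fa_carrier B \<Longrightarrow> v \<in> fa_carrier B \<Longrightarrow>
   s B (fa_mul u v) = fa_eval (pair (s B u) (s B v)) (s {x,y} (fa_mul (fa_var x) (fa_var y)))"
  apply (rule G1[where op=fa_mul])
      apply (rule mul_carrier; assumption)
     apply (rule fa_eval_mul; assumption)
    apply assumption+
  done

lemma wA_formula: "wA = fa_sub (fa_add (fa_var x) (fa_var y)) (fa_const (ts 0))"
proof -
  note S = wA_S5
  have "s {x,y} (fa_add (fa_var y) (fa_var x)) = fa_eval (pair (fa_var y) (fa_var x)) wA"
    using G1add'[of "{x,y}" "fa_var y" "fa_var x"] by (simp add: var_carrier svar)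
  moreover have "fa_add (fa_var y) (fa_var x) = (fa_add (fa_var x) (fa_var y) :: 'x list \<Rightarrow> 'k)"
    by (auto simp: fa_add_def)
  ultimately have C: "wA = fa_eval (pair (fa_var y) (fa_var x)) wA" by (simp add: wA_def)
  have C1: "wA [x] = wA [y]" using arg_cong[OF C, of "\<lambda>f. f [x]"] xy
    by (simp add: eval5[OF S] pair_def fa_mul_1 fa_var_def fa_const_def)
  have C2: "wA [x,y] = wA [y,x]" using arg_cong[OF C, of "\<lambda>f. f [x,y]"] xy
    by (simp add: eval5[OF S] pair_def fa_mul_2 fa_var_def fa_const_def)
  have A: "wA [x,y] * wA [y,x] = 0"
  proof (rule assoc_coef[OF S])
    show "fa_eval (pair wA (fa_var z)) wA = fa_eval (pair (fa_var x) (fa_eval (pair (fa_var y) (fa_var z)) wA)) wA"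
      unfolding wA_def
      apply (rule assoc_id[where op=fa_add])
        apply (rule add_carrier; assumption)
       apply (rule fa_eval_add; assumption)
      apply (auto simp: fa_add_def)
      done
  qed
  have D: "wA [x,y] = 0" "wA [y,x] = 0" using A C2 by auto
  have "s {x} (fa_add (fa_var x) (fa_const 0)) = fa_eval (pair (s {x} (fa_var x)) (s {x} (fa_const 0))) wA"
    by (rule G1add') (auto intro: var_carrier)
  moreover have "fa_add (fa_var x) (fa_const 0) = (fa_var x :: 'x list \<Rightarrow> 'k)" by (auto simp: fa_add_def fa_const_def)
  ultimately have U: "fa_var x = fa_eval (pair (fa_var x) (fa_const (ts 0))) wA" by (simp add: svar s_const)
  have U0: "wA [] + wA [y] * ts 0 = 0" using arg_cong[OF U, of "\<lambda>f. f []"] xy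
    by (simp add: eval5[OF S] pair_def fa_var_def fa_const_def D)
  have U1: "wA [x] = 1" using arg_cong[OF U, of "\<lambda>f. f [x]"] xy
    by (simp add: eval5[OF S] pair_def fa_mul_1 fa_var_def fa_const_def D)
  show ?thesis
  proof
    fix t
    have W0: "wA [] = - ts 0" using U0 U1 C1 by (simp add: eq_neg_iff_add_eq_0)
    show "wA t = fa_sub (fa_add (fa_var x) (fa_var y)) (fa_const (ts 0)) t"
      using ind5[OF S, of t] W0 U1 C1 D xy by (auto simp: fa_sub_def fa_add_def fa_var_def fa_const_def)
  qed
qed

lemma add_formula: assumes B: "finite B" and u: "u \<in> fa_carrier B" and v: "v \<in> fa_carrier B"
  shows "s B (fa_add u v) = fa_sub (fa_add (s B u) (s B v)) (fa_const (ts 0))"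
proof -
  have "s B (fa_add u v) = fa_eval (pair (s B u) (s B v)) wA" by (rule G1add'[OF B u v])
  also have "\<dots> = fa_sub (fa_add (s B u) (s B v)) (fa_const (ts 0))"
    unfolding wA_formula using xy
    by (simp add: fa_eval_sub fa_eval_add pair_def)
  finally show ?thesis .
qed

end



context S3
begin

definition wM where "wM = s {x,y} (fa_mul (fa_var x) (fa_var y))"

lemma wM_carrier: "wM \<in> fa_carrier {x,y}"
  unfolding wM_def by (intro s_carrier mul_carrier var_carrier) auto

lemmas G1M = G1mul'[folded wM_def]

lemma wM_S5: "supp wM \<subseteq> S5"
proof -
  let ?B = "{x,y,z}"
  have fB: "finite ?B" by simp
  have vx: "fa_var x \<in> fa_carrier ?B" and vy: "fa_var y \<in> fa_carrier ?B" and vz: "fa_var z \<in> fa_carrier ?B"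
    by (auto intro: var_carrier)
  let ?c = "fa_const (ts 0) :: 'x list \<Rightarrow> 'k"
  have L1: "s ?B (fa_mul (fa_var x) (fa_add (fa_var y) (fa_var z))) = fa_eval (pair (fa_var x) (fa_sub (fa_add (fa_var y) (fa_var z)) ?c)) wM"
    using G1M[OF fB vx add_carrier[OF vy vz]] by (simp add: svar add_formula[OF fB vy vz])
  have R1: "s ?B (fa_add (fa_mul (fa_var x) (fa_var y)) (fa_mul (fa_var x) (fa_var z)))
      = fa_sub (fa_add (fa_eval (pair (fa_var x) (fa_var y)) wM) (fa_eval (pair (fa_var x) (fa_var z)) wM)) ?c"
    by (simp add: add_formula[OF fB mul_carrier[OF vx vy] mul_carrier[OF vx vz]] G1M[OF fB vx vy] G1M[OF fB vx vz] svar)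
  have E1: "fa_eval (pair (fa_var x) (fa_sub (fa_add (fa_var y) (fa_var z)) ?c)) wM
      = fa_sub (fa_add (fa_eval (pair (fa_var x) (fa_var y)) wM) (fa_eval (pair (fa_var x) (fa_var z)) wM)) ?c"
    using L1 R1 by (simp add: fa_mul_add_right)
  have M1: "fa_eval (sg y x y z (ts 0)) wM =
      fa_sub (fa_add (fa_eval (\<lambda>c. if c = y then fa_var y else fa_var x) wM)
                     (fa_eval (\<lambda>c. if c = y then fa_var z else fa_var x) wM)) ?c"
  proof -
    have a: "fa_eval (sg y x y z (ts 0)) wM = fa_eval (pair (fa_var x) (fa_sub (fa_add (fa_var y) (fa_var z)) ?c)) wM"
      by (rule fa_eval_cong[OF wM_carrier]) (auto simp: sg_def[OF xy xy xz yz] pair_def xy)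
    have b: "fa_eval (\<lambda>c. if c = y then fa_var y else fa_var x) wM = fa_eval (pair (fa_var x) (fa_var y)) wM"
      by (rule fa_eval_cong[OF wM_carrier]) (auto simp: pair_def xy)
    have c: "fa_eval (\<lambda>c. if c = y then fa_var z else fa_var x) wM = fa_eval (pair (fa_var x) (fa_var z)) wM"
      by (rule fa_eval_cong[OF wM_carrier]) (auto simp: pair_def xy)
    show ?thesis using E1 a b c by simp
  qed
  have cy: "\<forall>u\<in>supp wM. cnt y u \<le> 1" by (rule mixed[OF xy xy xz yz wM_carrier M1])
  have L2: "s ?B (fa_mul (fa_add (fa_var x) (fa_var y)) (fa_var z)) = fa_eval (pair (fa_sub (fa_add (fa_var x) (fa_var y)) ?c) (fa_var z)) wM"
    using G1M[OF fB add_carrier[OF vx vy] vz] by (simp add: svar add_formula[OF fB vx vy])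
  have R2: "s ?B (fa_add (fa_mul (fa_var x) (fa_var z)) (fa_mul (fa_var y) (fa_var z)))
      = fa_sub (fa_add (fa_eval (pair (fa_var x) (fa_var z)) wM) (fa_eval (pair (fa_var y) (fa_var z)) wM)) ?c"
    by (simp add: add_formula[OF fB mul_carrier[OF vx vz] mul_carrier[OF vy vz]] G1M[OF fB vx vz] G1M[OF fB vy vz] svar)
  have E2: "fa_eval (pair (fa_sub (fa_add (fa_var x) (fa_var y)) ?c) (fa_var z)) wM
      = fa_sub (fa_add (fa_eval (pair (fa_var x) (fa_var z)) wM) (fa_eval (pair (fa_var y) (fa_var z)) wM)) ?c"
    using L2 R2 by (simp add: fa_mul_add_left)
  have wc': "wM \<in> fa_carrier {y,x}" using wM_carrier by (simp add: insert_commute)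
  have M2: "fa_eval (sg x z x y (ts 0)) wM =
      fa_sub (fa_add (fa_eval (\<lambda>c. if c = x then fa_var x else fa_var z) wM)
                     (fa_eval (\<lambda>c. if c = x then fa_var y else fa_var z) wM)) ?c"
  proof -
    have a: "fa_eval (sg x z x y (ts 0)) wM = fa_eval (pair (fa_sub (fa_add (fa_var x) (fa_var y)) ?c) (fa_var z)) wM"
      by (rule fa_eval_cong[OF wM_carrier]) (auto simp: sg_def[OF xy[symmetric] xz[symmetric] yz[symmetric] xy] pair_def)
    have b: "fa_eval (\<lambda>c. if c = x then fa_var x else fa_var z) wM = fa_eval (pair (fa_var x) (fa_var z)) wM"
      by (rule fa_eval_cong[OF wM_carrier]) (auto simp: pair_def)
    have c: "fa_eval (\<lambda>c. if c = x then fa_var y else fa_var z) wM = fa_eval (pair (fa_var y) (fa_var z)) wM"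
      by (rule fa_eval_cong[OF wM_carrier]) (auto simp: pair_def)
    show ?thesis using E2 a b c by simp
  qed
  have cx: "\<forall>u\<in>supp wM. cnt x u \<le> 1"
    by (rule mixed[OF xy[symmetric] xz[symmetric] yz[symmetric] xy wc' M2])
  show ?thesis
  proof
    fix u assume u: "u \<in> supp wM"
    have "set u \<subseteq> {x,y}" using wM_carrier u by (auto simp: carrier_iff)
    then show "u \<in> S5" using words5[OF xy] cx cy u by blast
  qed
qed

end



definition EE :: "'k::field \<Rightarrow> 'k \<Rightarrow> ('x list \<Rightarrow> 'k) \<Rightarrow> ('x list \<Rightarrow> 'k) \<Rightarrow> ('x list \<Rightarrow> 'k)" where
  "EE k c a b = fa_add (fa_mul (fa_const k) (fa_mul (fa_sub a (fa_const c)) (fa_sub b (fa_const c)))) (fa_const c)"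

lemma mul_vars: "fa_mul (fa_var a) (fa_var b) t = (if t = [a,b] then 1 else 0)"
  unfolding fa_mul_var_left by (auto simp: fa_var_def split: list.split)

lemma EE_vars: "EE k c (fa_var a) (fa_var b) t =
   k * ((if t = [a,b] then 1 else 0) - c * fa_var a t - c * (fa_var b t - fa_const c t)) + fa_const c t"
  unfolding EE_def fa_mul_sub_left fa_mul_sub_right fa_mul_const_left fa_mul_const_right
  by (simp add: fa_sub_def fa_add_def smul_def mul_vars algebra_simps)

context S3
begin

lemma wM_cases:
  "(wM [y,x] = 0 \<and> wM = EE (inverse (ts 1 - ts 0)) (ts 0) (fa_var x) (fa_var y))
 \<or> (wM [x,y] = 0 \<and> wM = EE (inverse (ts 1 - ts 0)) (ts 0) (fa_var y) (fa_var x))"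
proof -
  note S = wM_S5
  let ?c = "ts 0" and ?e = "ts 1"
  have "?e \<noteq> ?c" using ts_bij by (metis bij_def inj_eq one_neq_zero)
  then have ec: "?e - ?c \<noteq> 0" by simp
  have "s {x} (fa_mul (fa_var x) (fa_const 0)) = fa_eval (pair (s {x} (fa_var x)) (s {x} (fa_const 0))) wM"
    by (rule G1M) (auto intro: var_carrier)
  moreover have "fa_mul (fa_var x) (fa_const 0) = (fa_const 0 :: 'x list \<Rightarrow> 'k)"
    by (auto simp: fa_mul_def fa_const_def)
  ultimately have Z: "fa_const ?c = fa_eval (pair (fa_var x) (fa_const ?c)) wM" by (simp add: svar s_const)
  have Z0: "wM [] + wM [y] * ?c = ?c" using arg_cong[OF Z, of "\<lambda>f. f []"] xy
    by (simp add: eval5[OF S] pair_def fa_var_def fa_const_def)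
  have Z1: "wM [x] + wM [x,y] * ?c + wM [y,x] * ?c = 0" using arg_cong[OF Z, of "\<lambda>f. f [x]"] xy
    by (simp add: eval5[OF S] pair_def fa_mul_1 fa_var_def fa_const_def)
  have "s {x} (fa_mul (fa_var x) (fa_const 1)) = fa_eval (pair (s {x} (fa_var x)) (s {x} (fa_const 1))) wM"
    by (rule G1M) (auto intro: var_carrier)
  then have O: "fa_var x = fa_eval (pair (fa_var x) (fa_const ?e)) wM" by (simp add: svar s_const)
  have O0: "wM [] + wM [y] * ?e = 0" using arg_cong[OF O, of "\<lambda>f. f []"] xy
    by (simp add: eval5[OF S] pair_def fa_var_def fa_const_def)
  have O1: "wM [x] + wM [x,y] * ?e + wM [y,x] * ?e = 1" using arg_cong[OF O, of "\<lambda>f. f [x]"] xy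
    by (simp add: eval5[OF S] pair_def fa_mul_1 fa_var_def fa_const_def)
  have A: "wM [x,y] * wM [y,x] = 0"
  proof (rule assoc_coef[OF S])
    show "fa_eval (pair wM (fa_var z)) wM = fa_eval (pair (fa_var x) (fa_eval (pair (fa_var y) (fa_var z)) wM)) wM"
      unfolding wM_def
      apply (rule assoc_id[where op=fa_mul])
        apply (rule mul_carrier; assumption)
       apply (rule fa_eval_mul; assumption)
      apply (rule fa_mul_assoc)
      done
  qed
  let ?k = "inverse (?e - ?c)"
  have D: "wM [x,y] + wM [y,x] = ?k"
  proof -
    have "(wM [x,y] + wM [y,x]) * (?e - ?c) = 1" using Z1 O1 by algebra
    then show ?thesis using ec by (simp add: field_simps)
  qed
  have Bt: "wM [x] = - ?k * ?c"
  proof -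
    have "wM [x] = - (wM [x,y] + wM [y,x]) * ?c" using Z1 by algebra
    then show ?thesis using D by simp
  qed
  have G: "wM [y] = - ?k * ?c"
  proof -
    have "wM [y] * (?e - ?c) = (wM [] + wM [y] * ?e) - (wM [] + wM [y] * ?c)" by (simp add: algebra_simps)
    also have "\<dots> = - ?c" using Z0 O0 by simp
    finally have "wM [y] * (?e - ?c) = - ?c" .
    then show ?thesis using ec by (simp add: field_simps)
  qed
  have "wM [] = ?c - wM [y] * ?c" using Z0 by (simp add: eq_diff_eq)
  then have Al: "wM [] = ?c + ?k * ?c * ?c" using G by simp
  show ?thesis
  proof (cases "wM [y,x] = 0")
    case True
    then have d: "wM [x,y] = ?k" using D by simp
    have "wM = EE ?k ?c (fa_var x) (fa_var y)"
    proof
      fix t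
      show "wM t = EE ?k ?c (fa_var x) (fa_var y) t"
        unfolding EE_vars ind5[OF S, of t] using xy True d Bt G Al
        by (auto simp: fa_var_def fa_const_def algebra_simps)
    qed
    then show ?thesis using True by simp
  next
    case False
    then have d0: "wM [x,y] = 0" using A by simp
    then have d: "wM [y,x] = ?k" using D by simp
    have "wM = EE ?k ?c (fa_var y) (fa_var x)"
    proof
      fix t
      show "wM t = EE ?k ?c (fa_var y) (fa_var x) t"
        unfolding EE_vars ind5[OF S, of t] using xy d0 d Bt G Al
        by (auto simp: fa_var_def fa_const_def algebra_simps)
    qed
    then show ?thesis using d0 by simp
  qed
qed

end



lemma fa_eval_EE: "finite (supp a) \<Longrightarrow> finite (supp b) \<Longrightarrow>
   fa_eval \<sigma> (EE k c a b) = EE k c (fa_eval \<sigma> a) (fa_eval \<sigma> b)"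
  by (simp add: EE_def fa_eval_add fa_eval_mul fa_eval_sub)

lemma EE_xy_at: "a \<noteq> b \<Longrightarrow> EE k c (fa_var a) (fa_var b) [a,b] = k"
  unfolding EE_vars by (simp add: fa_var_def fa_const_def)

lemma EE_yx_at: "a \<noteq> b \<Longrightarrow> EE k c (fa_var b) (fa_var a) [a,b] = 0"
  unfolding EE_vars by (simp add: fa_var_def fa_const_def)

context S3
begin

lemma mul_via: assumes W: "wM = EE k c (fa_var x) (fa_var y)" and B: "finite B"
  and u: "u \<in> fa_carrier B" and v: "v \<in> fa_carrier B"
  shows "s B (fa_mul u v) = EE k c (s B u) (s B v)"
  using G1M[OF B u v] xy by (simp add: W fa_eval_EE pair_def)

lemma mul_via': assumes W: "wM = EE k c (fa_var y) (fa_var x)" and B: "finite B"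
  and u: "u \<in> fa_carrier B" and v: "v \<in> fa_carrier B"
  shows "s B (fa_mul u v) = EE k c (s B v) (s B u)"
  using G1M[OF B u v] xy by (simp add: W fa_eval_EE pair_def)

lemma final_mul:
  "(\<forall>A. finite A \<longrightarrow> (\<forall>u\<in>fa_carrier A. \<forall>v\<in>fa_carrier A.
      s A (fa_mul u v) = EE (inverse (ts 1 - ts 0)) (ts 0) (s A u) (s A v)))
   \<longleftrightarrow> \<not> (\<forall>A. finite A \<longrightarrow> (\<forall>u\<in>fa_carrier A. \<forall>v\<in>fa_carrier A.
      s A (fa_mul u v) = EE (inverse (ts 1 - ts 0)) (ts 0) (s A v) (s A u)))"
proof -
  let ?k = "inverse (ts 1 - ts 0)" and ?c = "ts 0"
  have "ts 1 \<noteq> ts 0" using ts_bij by (metis bij_def inj_eq one_neq_zero)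
  then have k0: "?k \<noteq> 0" by simp
  have fxy: "finite {x,y}" by simp
  have vx: "fa_var x \<in> fa_carrier {x,y}" and vy: "fa_var y \<in> fa_carrier {x,y}" by (auto intro: var_carrier)
  have sxy: "s {x,y} (fa_mul (fa_var x) (fa_var y)) = wM" by (simp add: wM_def)
  have sx: "s {x,y} (fa_var x) = fa_var x" and sy: "s {x,y} (fa_var y) = fa_var y" by (auto simp: svar)
  from wM_cases show ?thesis
  proof
    assume h: "wM [y,x] = 0 \<and> wM = EE ?k ?c (fa_var x) (fa_var y)"
    have I: "\<forall>A. finite A \<longrightarrow> (\<forall>u\<in>fa_carrier A. \<forall>v\<in>fa_carrier A. s A (fa_mul u v) = EE ?k ?c (s A u) (s A v))"
      using mul_via[of ?k ?c] h by blast
    have nII: "\<not> (\<forall>A. finite A \<longrightarrow> (\<forall>u\<in>fa_carrier A. \<forall>v\<in>fa_carrier A. s A (fa_mul u v) = EE ?k ?c (s A v) (s A u)))"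
    proof
      assume II: "\<forall>A. finite A \<longrightarrow> (\<forall>u\<in>fa_carrier A. \<forall>v\<in>fa_carrier A. s A (fa_mul u v) = EE ?k ?c (s A v) (s A u))"
      have "s {x,y} (fa_mul (fa_var x) (fa_var y)) = EE ?k ?c (s {x,y} (fa_var y)) (s {x,y} (fa_var x))"
        using II fxy vx vy by blast
      then have "wM = EE ?k ?c (fa_var y) (fa_var x)" by (simp only: sxy sx sy)
      then have "wM [x,y] = 0" using EE_yx_at[OF xy] by simp
      moreover have "wM [x,y] = ?k" using h EE_xy_at[OF xy] by simp
      ultimately show False using k0 by simp
    qed
    show ?thesis using I nII by blast
  next
    assume h: "wM [x,y] = 0 \<and> wM = EE ?k ?c (fa_var y) (fa_var x)"
    have II: "\<forall>A. finite A \<longrightarrow> (\<forall>u\<in>fa_carrier A. \<forall>v\<in>fa_carrier A. s A (fa_mul u v) = EE ?k ?c (s A v) (s A u))"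
      using mul_via'[of ?k ?c] h by blast
    have nI: "\<not> (\<forall>A. finite A \<longrightarrow> (\<forall>u\<in>fa_carrier A. \<forall>v\<in>fa_carrier A. s A (fa_mul u v) = EE ?k ?c (s A u) (s A v)))"
    proof
      assume I: "\<forall>A. finite A \<longrightarrow> (\<forall>u\<in>fa_carrier A. \<forall>v\<in>fa_carrier A. s A (fa_mul u v) = EE ?k ?c (s A u) (s A v))"
      have "s {x,y} (fa_mul (fa_var x) (fa_var y)) = EE ?k ?c (s {x,y} (fa_var x)) (s {x,y} (fa_var y))"
        using I fxy vx vy by blast
      then have "wM = EE ?k ?c (fa_var x) (fa_var y)" by (simp only: sxy sx sy)
      then have "wM [x,y] = ?k" using EE_xy_at[OF xy] by simp
      moreover have "wM [x,y] = 0" using h by (rule conjunct1)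
      ultimately show False using k0 by simp
    qed
    show ?thesis using II nI by blast
  qed
qed

end

theorem mainTheorem8:
  fixes \<Phi> :: "'x set \<Rightarrow> 'x set \<Rightarrow> (('x list \<Rightarrow> 'k::field) \<Rightarrow> ('x list \<Rightarrow> 'k)) \<Rightarrow> (('x list \<Rightarrow> 'k) \<Rightarrow> ('x list \<Rightarrow> 'k))"
    and x0 :: 'x
  assumes infK: "infinite (UNIV :: 'k set)"
    and infX: "infinite (UNIV :: 'x set)"
    and auto: "obj_fixing_auto \<Phi>"
    and fixvars: "\<forall>A. finite A \<longrightarrow> (\<forall>x\<in>A. main_fun \<Phi> x0 A (fa_var x) = fa_var x)"
  shows "\<exists>ts :: 'k \<Rightarrow> 'k. bij ts
     \<and> (\<forall>A. finite A \<longrightarrow> (\<forall>c. main_fun \<Phi> x0 A (fa_const c) = fa_const (ts c)))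
     \<and> ts 1 \<noteq> ts 0
     \<and> (\<forall>A. finite A \<longrightarrow> (\<forall>u\<in>fa_carrier A. \<forall>v\<in>fa_carrier A.
          main_fun \<Phi> x0 A (fa_add u v)
            = fa_sub (fa_add (main_fun \<Phi> x0 A u) (main_fun \<Phi> x0 A v)) (fa_const (ts 0))))
     \<and> ((\<forall>A. finite A \<longrightarrow> (\<forall>u\<in>fa_carrier A. \<forall>v\<in>fa_carrier A.
          main_fun \<Phi> x0 A (fa_mul u v)
            = fa_add (fa_mul (fa_const (inverse (ts 1 - ts 0)))
                        (fa_mul (fa_sub (main_fun \<Phi> x0 A u) (fa_const (ts 0)))
                                (fa_sub (main_fun \<Phi> x0 A v) (fa_const (ts 0)))))
                     (fa_const (ts 0))))
        \<longleftrightarrow> \<not> (\<forall>A. finite A \<longrightarrow> (\<forall>u\<in>fa_carrier A. \<forall>v\<in>fa_carrier A.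
          main_fun \<Phi> x0 A (fa_mul u v)
            = fa_add (fa_mul (fa_const (inverse (ts 1 - ts 0)))
                        (fa_mul (fa_sub (main_fun \<Phi> x0 A v) (fa_const (ts 0)))
                                (fa_sub (main_fun \<Phi> x0 A u) (fa_const (ts 0)))))
                     (fa_const (ts 0)))))"
proof -
  obtain x :: 'x where True by simp
  obtain y :: 'x where y: "y \<notin> {x}" using ex_new_if_finite[OF infX, of "{x}"] by auto
  obtain z :: 'x where z: "z \<notin> {x,y}" using ex_new_if_finite[OF infX, of "{x,y}"] by auto
  interpret S3 \<Phi> x0 x y z
    apply unfold_locales
        apply (rule auto)
       apply (rule fixvars)
    using y z by auto
  have c3: "ts 1 \<noteq> ts 0" using ts_bij by (metis bij_def inj_eq one_neq_zero)
  have c2: "\<forall>A. finite A \<longrightarrow> (\<forall>c. main_fun \<Phi> x0 A (fa_const c) = fa_const (ts c))"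
    using s_const by blast
  have c4: "\<forall>A. finite A \<longrightarrow> (\<forall>u\<in>fa_carrier A. \<forall>v\<in>fa_carrier A.
          main_fun \<Phi> x0 A (fa_add u v)
            = fa_sub (fa_add (main_fun \<Phi> x0 A u) (main_fun \<Phi> x0 A v)) (fa_const (ts 0)))"
    using add_formula by blast
  note c5 = final_mul[unfolded EE_def]
  show ?thesis
    by (rule exI[of _ ts], intro conjI ts_bij c2 c3 c4 c5)
qed


end
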